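(* Let $(\Omega,\mathcal{F},\mathbb{P})$ be a nonatomic probability space and let $(\mathcal{X},\mathcal{X}^\ast)$ be a pair of law-invariant vector subspaces of $L^1$, each containing $L^\infty$, such that $XY\in L^1$ for all $X\in\mathcal{X}$ and $Y\in\mathcal{X}^\ast$. Let $\varphi:\mathcal{X}\to(-\infty,\infty]$ be proper, convex, $\sigma(\mathcal{X},\mathcal{X}^\ast)$-lower semicontinuous, law invariant, and translation invariant along the constant random variable $1$. Then the following statements are equivalent: (a) $\varphi$ is affine along some nonconstant $Z\in\mathcal{X}$; (b) $\varphi$ is translation invariant along some nonconstant $Z\in\mathcal{X}$; (c) there exists $a\in\mathbb{R}$ such that $\varphi(X)=a\,\mathbb{E}_{\mathbb{P}}[X]+\varphi(0)$ for every $X\in\mathcal{X}$.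
   Context: $L^0$ denotes the space of real random variables on $(\Omega,\mathcal{F},\mathbb{P})$ modulo almost-sure equality; real numbers are identified with a.s. constant random variables, and "nonconstant" means not a.s. constant. For $X,Y\in L^0$, $X\sim Y$ means same law under $\mathbb{P}$. A set $\mathcal{S}\subset L^0$ is law invariant if $X\in\mathcal{S}$ whenever $X\in L^0$ and $X\sim Y$ for some $Y\in\mathcal{S}$. $\sigma(\mathcal{X},\mathcal{X}^\ast)$ is the weakest linear topology on $\mathcal{X}$ for which $X\mapsto\mathbb{E}_{\mathbb{P}}[XY]$ is continuous for every $Y\in\mathcal{X}^\ast$. For $\varphi:\mathcal{X}\to(-\infty,\infty]$: $\mathrm{dom}(\varphi)=\{X:\varphi(X)<\infty\}$; proper means $\mathrm{dom}(\varphi)\neq\emptyset$; law invariant means $\varphi(X)=\varphi(Y)$ whenever $X\sim Y$; $\sigma(\mathcal{X},\mathcal{X}^\ast)$-lower semicontinuous means $\varphi(X)\le\liminf_\alpha\varphi(X_\alpha)$ for every net $X_\alpha\to X$ in $\sigma(\mathcal{X},\mathcal{X}^\ast)$. For a linear subspace $\mathcal{M}\subset\mathcal{X}$, $\varphi$ is affine along $\mathcal{M}$ if $\mathcal{M}\subset\mathrm{dom}(\varphi)$ and $Z\mapsto\varphi(Z)-\varphi(0)$ is linear on $\mathcal{M}$; translation invariant along $\mathcal{M}$ if it is affine along $\mathcal{M}$ and $\varphi(X+Z)=\varphi(X)+\varphi(Z)-\varphi(0)$ for all $X\in\mathcal{X}$, $Z\in\mathcal{M}$. "Along $Z$" means along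 $\mathrm{span}(Z)=\{mZ:m\in\mathbb{R}\}$. *)

theory Defs
  imports "HOL-Probability.Probability"
begin

text \<open>Random variables are represented by real-valued functions on the sample space;
  elements of L0 are Borel measurable functions, identified up to a.e. equality implicitly
  (all notions below are invariant under a.e. equality through law invariance).\<close>

definition nonatomic :: "'a measure \<Rightarrow> bool" where
  "nonatomic M \<longleftrightarrow> (\<forall>A\<in>sets M. 0 < measure M A \<longrightarrow>
      (\<exists>B\<in>sets M. B \<subseteq> A \<and> 0 < measure M B \<and> measure M B < measure M A))"

definition law_invariant_set :: "'a measure \<Rightarrow> ('a \<Rightarrow> real) set \<Rightarrow> bool" where
  "law_invariant_set M S \<longleftrightarrow> (\<forall>X Y. X \<in> borel_measurable M \<longrightarrow> Y \<in> S \<longrightarrow>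
      distr M borel X = distr M borel Y \<longrightarrow> X \<in> S)"

definition linear_subspace_rv :: "('a \<Rightarrow> real) set \<Rightarrow> bool" where
  "linear_subspace_rv S \<longleftrightarrow> (\<lambda>_. 0) \<in> S \<and>
     (\<forall>X\<in>S. \<forall>Y\<in>S. (\<lambda>\<omega>. X \<omega> + Y \<omega>) \<in> S) \<and> (\<forall>X\<in>S. \<forall>c::real. (\<lambda>\<omega>. c * X \<omega>) \<in> S)"

definition Linf :: "'a measure \<Rightarrow> ('a \<Rightarrow> real) set" where
  "Linf M = {X. X \<in> borel_measurable M \<and> (\<exists>C. AE \<omega> in M. \<bar>X \<omega>\<bar> \<le> C)}"

definition weak_top :: "'a measure \<Rightarrow> ('a \<Rightarrow> real) set \<Rightarrow> ('a \<Rightarrow> real) set \<Rightarrow> ('a \<Rightarrow> real) topology" where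
  "weak_top M XX XXs = topology (\<lambda>U. U \<subseteq> XX \<and> (\<forall>X\<in>U. \<exists>F \<epsilon>. finite F \<and> F \<subseteq> XXs \<and> \<epsilon> > 0 \<and>
      {X'\<in>XX. \<forall>Y\<in>F. \<bar>(\<integral>\<omega>. X' \<omega> * Y \<omega> \<partial>M) - (\<integral>\<omega>. X \<omega> * Y \<omega> \<partial>M)\<bar> < \<epsilon>} \<subseteq> U))"

text \<open>Lower semicontinuity w.r.t. a topology (neighbourhood form; equivalent to the net form).\<close>
definition lsc_wrt :: "'b topology \<Rightarrow> ('b \<Rightarrow> ereal) \<Rightarrow> bool" where
  "lsc_wrt T f \<longleftrightarrow> (\<forall>x\<in>topspace T. \<forall>c. c < f x \<longrightarrow>
      (\<exists>U. openin T U \<and> x \<in> U \<and> (\<forall>y\<in>U. c < f y)))"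

definition convex_on_rv :: "('a \<Rightarrow> real) set \<Rightarrow> (('a \<Rightarrow> real) \<Rightarrow> ereal) \<Rightarrow> bool" where
  "convex_on_rv XX \<phi> \<longleftrightarrow> (\<forall>X\<in>XX. \<forall>Y\<in>XX. \<forall>t::real. 0 < t \<and> t < 1 \<longrightarrow>
      \<phi> (\<lambda>\<omega>. t * X \<omega> + (1 - t) * Y \<omega>) \<le> ereal t * \<phi> X + ereal (1 - t) * \<phi> Y)"

definition law_invariant_fun :: "'a measure \<Rightarrow> ('a \<Rightarrow> real) set \<Rightarrow> (('a \<Rightarrow> real) \<Rightarrow> ereal) \<Rightarrow> bool" where
  "law_invariant_fun M XX \<phi> \<longleftrightarrow> (\<forall>X\<in>XX. \<forall>Y\<in>XX. distr M borel X = distr M borel Y \<longrightarrow> \<phi> X = \<phi> Y)"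

definition rv_span :: "('a \<Rightarrow> real) \<Rightarrow> ('a \<Rightarrow> real) set" where
  "rv_span Z = {(\<lambda>\<omega>. m * Z \<omega>) | m::real. True}"

definition affine_along :: "(('a \<Rightarrow> real) \<Rightarrow> ereal) \<Rightarrow> ('a \<Rightarrow> real) set \<Rightarrow> bool" where
  "affine_along \<phi> S \<longleftrightarrow> (\<forall>Z\<in>S. \<phi> Z < \<infinity>) \<and>
     (\<forall>U\<in>S. \<forall>V\<in>S. \<forall>a b::real.
        \<phi> (\<lambda>\<omega>. a * U \<omega> + b * V \<omega>) - \<phi> (\<lambda>_. 0)
          = ereal a * (\<phi> U - \<phi> (\<lambda>_. 0)) + ereal b * (\<phi> V - \<phi> (\<lambda>_. 0)))"

definition translation_invariant_along ::
  "('a \<Rightarrow> real) set \<Rightarrow> (('a \<Rightarrow> real) \<Rightarrow> ereal) \<Rightarrow> ('a \<Rightarrow> real) set \<Rightarrow> bool" where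
  "translation_invariant_along XX \<phi> S \<longleftrightarrow> affine_along \<phi> S \<and>
     (\<forall>X\<in>XX. \<forall>Z\<in>S. \<phi> (\<lambda>\<omega>. X \<omega> + Z \<omega>) = \<phi> X + \<phi> Z - \<phi> (\<lambda>_. 0))"

definition nonconstant_rv :: "'a measure \<Rightarrow> ('a \<Rightarrow> real) \<Rightarrow> bool" where
  "nonconstant_rv M Z \<longleftrightarrow> \<not> (\<exists>c. AE \<omega> in M. Z \<omega> = c)"

end

theory Submission
  imports Defs
begin

context prob_space begin

lemma nonatomic_small:
  assumes na: "nonatomic M" and A: "A \<in> events" "0 < prob A" and e: "0 < e"
  shows "\<exists>B\<in>events. B \<subseteq> A \<and> 0 < prob B \<and> prob B < e"
proof -
  have "\<exists>B\<in>events. B \<subseteq> A \<and> 0 < prob B \<and> prob B \<le> prob A / 2^n" for n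
  proof (induction n)
    case 0 then show ?case using A by auto
  next
    case (Suc n)
    then obtain B where B: "B \<in> events" "B \<subseteq> A" "0 < prob B" "prob B \<le> prob A / 2^n" by auto
    then obtain B' where B': "B' \<in> events" "B' \<subseteq> B" "0 < prob B'" "prob B' < prob B"
      using na unfolding nonatomic_def by blast
    have d: "prob (B - B') = prob B - prob B'"
      using B B' by (simp add: finite_measure_Diff)
    show ?case
    proof (cases "prob B' \<le> prob B / 2")
      case True then show ?thesis using B B' by (intro bexI[of _ B']) auto
    next
      case False then show ?thesis using B B' d by (intro bexI[of _ "B - B'"]) auto
    qed
  qed
  moreover obtain n where "prob A / 2^n < e"
  proof -
    obtain n where "prob A / e < 2^n" using real_arch_pow[of 2 "prob A / e"] by auto
    then have "prob A / 2^n < e" using e by (simp add: field_simps)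
    then show ?thesis using that by blast
  qed
  ultimately show ?thesis by (meson le_less_trans)
qed

end

context prob_space begin

lemma sierpinski:
  assumes na: "nonatomic M" and S: "S \<in> events" and x: "0 \<le> x" "x \<le> prob S"
  shows "\<exists>B\<in>events. B \<subseteq> S \<and> prob B = x"
proof -
  define cands where "cands T = {C \<in> events. C \<subseteq> S - T \<and> prob C \<le> x - prob T}" for T
  define sig where "sig T = Sup (prob ` cands T)" for T
  have bdd: "bdd_above (prob ` cands T)" for T by (intro bdd_aboveI[of _ 1]) auto
  have ne: "{} \<in> cands T" if "prob T \<le> x" for T using that by (auto simp: cands_def)
  have ex: "\<exists>C. C \<in> cands T \<and> sig T \<le> 2 * prob C" if Tx: "prob T \<le> x" for T
  proof (cases "sig T \<le> 0")
    case True then show ?thesis using ne[OF Tx] by (intro exI[of _ "{}"]) auto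
  next
    case False
    then have "sig T / 2 < sig T" by simp
    then obtain p where "p \<in> prob ` cands T" "sig T / 2 < p"
      unfolding sig_def using less_cSup_iff[OF _ bdd] ne[OF Tx] by blast
    then show ?thesis by force
  qed
  define step where "step T = T \<union> (SOME C. C \<in> cands T \<and> sig T \<le> 2 * prob C)" for T
  define B where "B n = (step ^^ n) {}" for n
  have stepP: "step T \<in> events \<and> T \<subseteq> step T \<and> step T \<subseteq> S \<and> prob (step T) \<le> x \<and>
      sig T \<le> 2 * (prob (step T) - prob T)"
    if T: "T \<in> events" "T \<subseteq> S" "prob T \<le> x" for T
  proof -
    let ?C = "SOME C. C \<in> cands T \<and> sig T \<le> 2 * prob C"
    have C: "?C \<in> cands T \<and> sig T \<le> 2 * prob ?C" using someI_ex[OF ex[OF T(3)]] .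
    then have Ce: "?C \<in> events" "?C \<subseteq> S - T" "prob ?C \<le> x - prob T" by (auto simp: cands_def)
    have "prob (step T) = prob T + prob ?C"
      unfolding step_def using Ce T by (subst finite_measure_Union) auto
    then show ?thesis using Ce T C unfolding step_def by auto
  qed
  have Bn: "B n \<in> events \<and> B n \<subseteq> S \<and> prob (B n) \<le> x" for n
  proof (induction n)
    case 0 then show ?case using x by (simp add: B_def)
  next
    case (Suc n) then show ?case using stepP[of "B n"] by (simp add: B_def)
  qed
  have Bsuc: "B (Suc n) = step (B n)" for n by (simp add: B_def)
  have "B n \<subseteq> B (Suc n)" for n using stepP[of "B n"] Bn[of n] unfolding Bsuc by blast
  then have inc: "incseq B" by (intro incseq_SucI)
  define BB where "BB = (\<Union>n. B n)"
  have BBe: "BB \<in> events" using Bn by (auto simp: BB_def)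
  have lim: "(\<lambda>n. prob (B n)) \<longlonglongrightarrow> prob BB"
    unfolding BB_def by (rule finite_Lim_measure_incseq) (use Bn inc in auto)
  have BBx: "prob BB \<le> x"
    by (rule LIMSEQ_le_const2[OF lim]) (use Bn in auto)
  have BBS: "BB \<subseteq> S" using Bn by (auto simp: BB_def)
  have Ble: "prob (B n) \<le> prob BB" for n
    by (rule finite_measure_mono) (use Bn BBe in \<open>auto simp: BB_def\<close>)
  show ?thesis
  proof (cases "prob BB = x")
    case True then show ?thesis using BBe BBS by blast
  next
    case False
    then have lt: "prob BB < x" using BBx by simp
    have "prob (S - BB) = prob S - prob BB" using S BBe BBS by (simp add: finite_measure_Diff)
    then have "0 < prob (S - BB)" using lt x by simp
    then obtain D where D: "D \<in> events" "D \<subseteq> S - BB" "0 < prob D" "prob D < x - prob BB"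
      using nonatomic_small[OF na, of "S - BB" "x - prob BB"] S BBe lt by auto
    have Dc: "D \<in> cands (B n)" for n
      using D Ble[of n] by (auto simp: cands_def BB_def)
    have "prob D \<le> sig (B n)" for n
      unfolding sig_def using Dc[of n] by (intro cSup_upper bdd) auto
    have grow: "prob D \<le> 2 * (prob (B (Suc n)) - prob (B n))" for n
    proof -
      have "sig (B n) \<le> 2 * (prob (step (B n)) - prob (B n))" using stepP[of "B n"] Bn[of n] by blast
      then show ?thesis using \<open>prob D \<le> sig (B n)\<close> unfolding Bsuc by linarith
    qed
    have lin: "real n * prob D \<le> 2 * prob (B n)" for n
    proof (induction n)
      case 0 then show ?case by (simp add: B_def)
    next
      case (Suc n) then show ?case using grow[of n] by (simp add: algebra_simps)
    qed
    obtain n where "2 / prob D < real n" using reals_Archimedean2 by blast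
    then have "2 < real n * prob D" using D(3) by (simp add: divide_less_eq)
    then have "2 < 2 * prob (B n)" using lin[of n] by linarith
    moreover have "prob (B n) \<le> 1" by simp
    ultimately show ?thesis by simp
  qed
qed

end

primrec dy :: "('a set \<Rightarrow> 'a set) \<Rightarrow> 'a set \<Rightarrow> nat \<Rightarrow> nat \<Rightarrow> 'a set" where
  "dy h C 0 k = (if k = 0 then {} else C)"
| "dy h C (Suc n) k = (if even k then dy h C n (k div 2)
      else dy h C n (k div 2) \<union> h (dy h C n (k div 2 + 1) - dy h C n (k div 2)))"

lemma dy_scale: "dy h C (m + j) (c * 2^j) = dy h C m c"
  by (induction j) (auto simp: mult.assoc[symmetric])

context prob_space begin

lemma dy_props:
  assumes h: "\<And>S. S \<in> events \<Longrightarrow> h S \<in> events \<and> h S \<subseteq> S \<and> prob (h S) = prob S / 2"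
    and C: "C \<in> events"
  shows "dy h C n k \<in> events \<and> dy h C n k \<subseteq> C"
    and "2^n \<le> k \<Longrightarrow> dy h C n k = C"
    and "dy h C n k \<subseteq> dy h C n (Suc k)"
proof -
  show 1: "dy h C n k \<in> events \<and> dy h C n k \<subseteq> C" for n k
  proof (induction n arbitrary: k)
    case 0 then show ?case using C by auto
  next
    case (Suc n)
    have "h (dy h C n (k div 2 + 1) - dy h C n (k div 2)) \<in> events \<and>
          h (dy h C n (k div 2 + 1) - dy h C n (k div 2)) \<subseteq> dy h C n (k div 2 + 1) - dy h C n (k div 2)"
      using h Suc by blast
    then show ?case using Suc by auto
  qed
  show "2^n \<le> k \<Longrightarrow> dy h C n k = C" for n k
  proof (induction n arbitrary: k)
    case 0 then show ?case by auto
  next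
    case (Suc n)
    then have a: "dy h C n (k div 2) = C" "dy h C n (k div 2 + 1) = C" by auto
    have "h (C - C) = {}" using h[of "{}"] by auto
    then show ?case using a by auto
  qed
  show "dy h C n k \<subseteq> dy h C n (Suc k)" for n k
  proof (induction n arbitrary: k)
    case 0 then show ?case by auto
  next
    case (Suc n)
    show ?case
    proof (cases "even k")
      case True then show ?thesis by auto
    next
      case False
      then have e: "Suc k div 2 = k div 2 + 1" "even (Suc k)" by presburger+
      have "h (dy h C n (k div 2 + 1) - dy h C n (k div 2)) \<subseteq> dy h C n (k div 2 + 1) - dy h C n (k div 2)"
        using h 1 by (meson Diff_mono sets.Diff subset_refl)
      then show ?thesis using False e Suc[of "k div 2"] by auto
    qed
  qed
qed

lemma dy_mono:
  assumes h: "\<And>S. S \<in> events \<Longrightarrow> h S \<in> events \<and> h S \<subseteq> S \<and> prob (h S) = prob S / 2"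
    and C: "C \<in> events" and "k \<le> k'"
  shows "dy h C n k \<subseteq> dy h C n k'"
  using \<open>k \<le> k'\<close>
proof (induction k' rule: dec_induct)
  case base then show ?case by simp
next
  case (step k') then show ?case using dy_props(3)[OF h C, of n k'] by blast
qed

lemma dy_cross:
  assumes h: "\<And>S. S \<in> events \<Longrightarrow> h S \<in> events \<and> h S \<subseteq> S \<and> prob (h S) = prob S / 2"
    and C: "C \<in> events" and le: "c * 2^n \<le> k * 2^m"
  shows "dy h C m c \<subseteq> dy h C n k"
proof -
  have "dy h C m c = dy h C (m + n) (c * 2^n)" by (simp add: dy_scale)
  also have "\<dots> \<subseteq> dy h C (m + n) (k * 2^m)" by (rule dy_mono[OF h C le])
  also have "\<dots> = dy h C n k" using dy_scale[of h C n m k] by (simp add: add.commute)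
  finally show ?thesis .
qed

lemma dy_prob:
  assumes h: "\<And>S. S \<in> events \<Longrightarrow> h S \<in> events \<and> h S \<subseteq> S \<and> prob (h S) = prob S / 2"
    and C: "C \<in> events"
  shows "k \<le> 2^n \<Longrightarrow> prob (dy h C n k) = real k / 2^n * prob C"
proof (induction n arbitrary: k)
  case 0 then show ?case by (cases k) auto
next
  case (Suc n)
  show ?case
  proof (cases "even k")
    case True
    then obtain m where k: "k = 2 * m" by blast
    then have "m \<le> 2^n" using Suc.prems by simp
    then show ?thesis using Suc.IH[of m] k by simp
  next
    case False
    then obtain m where k: "k = 2 * m + 1" using oddE by blast
    then have m: "m + 1 \<le> 2^n" using Suc.prems by simp
    have kd: "k div 2 = m" using k by simp
    let ?D = "dy h C n (m + 1) - dy h C n m"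
    have ev: "dy h C n m \<in> events" "dy h C n (m+1) \<in> events" using dy_props(1)[OF h C] by auto
    have sub: "dy h C n m \<subseteq> dy h C n (m+1)" using dy_props(3)[OF h C] by simp
    have hD: "h ?D \<in> events" "h ?D \<subseteq> ?D" "prob (h ?D) = prob ?D / 2" using h[of ?D] ev by auto
    have pD: "prob ?D = prob (dy h C n (m+1)) - prob (dy h C n m)"
      using ev sub by (simp add: finite_measure_Diff)
    have "prob (dy h C (Suc n) k) = prob (dy h C n m \<union> h ?D)" using False kd by simp
    also have "\<dots> = prob (dy h C n m) + prob (h ?D)"
      using hD ev by (intro finite_measure_Union) auto
    also have "\<dots> = real k / 2 ^ Suc n * prob C"
    proof -
      have "prob ?D = prob C / 2^n"
        using pD Suc.IH[of m] Suc.IH[of "m+1"] m by (simp add: field_simps)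
      then have "prob (h ?D) = prob C / 2^Suc n" using hD(3) by simp
      then show ?thesis using Suc.IH[of m] m k by (simp add: field_simps)
    qed
    finally show ?thesis .
  qed
qed

end

context prob_space begin

lemma cond_uniform:
  assumes na: "nonatomic M" and C: "C \<in> events"
  shows "\<exists>V\<in>borel_measurable M. (\<forall>\<omega>\<in>space M. 0 \<le> V \<omega> \<and> V \<omega> \<le> 1) \<and>
     (\<forall>x. 0 \<le> x \<longrightarrow> x \<le> 1 \<longrightarrow> prob (C \<inter> {\<omega>\<in>space M. V \<omega> \<le> x}) = x * prob C)"
proof -
  define h where "h S = (SOME B. B \<in> events \<and> B \<subseteq> S \<and> prob B = prob S / 2)" for S
  have h: "h S \<in> events \<and> h S \<subseteq> S \<and> prob (h S) = prob S / 2" if "S \<in> events" for S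
  proof -
    have "\<exists>B\<in>events. B \<subseteq> S \<and> prob B = prob S / 2"
      by (rule sierpinski[OF na that]) auto
    then show ?thesis unfolding h_def by (rule someI2_bex) auto
  qed
  let ?E = "dy h C"
  have Eev: "?E n k \<in> events" "?E n k \<subseteq> C" for n k using dy_props(1)[OF h C] by auto
  have Etop: "2^n \<le> k \<Longrightarrow> ?E n k = C" for n k using dy_props(2)[OF h C] by auto
  have Emono: "k \<le> k' \<Longrightarrow> ?E n k \<subseteq> ?E n k'" for n k k' using dy_mono[OF h C] by auto
  have Ecross: "c * 2^n \<le> k * 2^m \<Longrightarrow> ?E m c \<subseteq> ?E n k" for m c n k using dy_cross[OF h C] by auto
  have Eprob: "k \<le> 2^n \<Longrightarrow> prob (?E n k) = real k / 2^n * prob C" for n k using dy_prob[OF h C] by auto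
  define cnt where "cnt n \<omega> = card {j. j < (2::nat)^n \<and> \<omega> \<notin> ?E n j}" for n \<omega>
  define g where "g n \<omega> = (\<Sum>j<(2::nat)^n. indicator (space M - ?E n j) \<omega>) / (2::real)^n" for n \<omega>
  have g_cnt: "g n \<omega> = real (cnt n \<omega>) / 2^n" if "\<omega> \<in> space M" for n \<omega>
  proof -
    have "(\<Sum>j<(2::nat)^n. indicator (space M - ?E n j) \<omega> :: real) = (\<Sum>j<(2::nat)^n. if \<omega> \<notin> ?E n j then 1 else 0)"
      using that by (intro sum.cong) (auto simp: indicator_def)
    also have "\<dots> = real (card ({..<(2::nat)^n} \<inter> {j. \<omega> \<notin> ?E n j}))"
      by (simp add: sum.If_cases)
    also have "{..<(2::nat)^n} \<inter> {j. \<omega> \<notin> ?E n j} = {j. j < (2::nat)^n \<and> \<omega> \<notin> ?E n j}" by auto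
    finally show ?thesis unfolding g_def cnt_def by simp
  qed
  have gmeas: "g n \<in> borel_measurable M" for n
    unfolding g_def using Eev by (intro borel_measurable_divide borel_measurable_sum) auto
  have cnt_le: "cnt n \<omega> \<le> k" if "\<omega> \<in> ?E n k" for n k \<omega>
  proof -
    have "{j. j < (2::nat)^n \<and> \<omega> \<notin> ?E n j} \<subseteq> {..<k}"
      using that Emono by (auto simp: not_less) (meson in_mono not_le_imp_less)
    then show ?thesis unfolding cnt_def by (metis card_lessThan card_mono finite_lessThan)
  qed
  have cnt_top: "cnt n \<omega> \<le> 2^n" for n \<omega>
    unfolding cnt_def by (metis (no_types, lifting) card_lessThan card_mono finite_lessThan lessThan_iff mem_Collect_eq subsetI)
  have in_cnt: "\<omega> \<in> ?E n (cnt n \<omega>)" if "\<omega> \<in> C" for n \<omega>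
  proof (rule ccontr)
    assume nin: "\<omega> \<notin> ?E n (cnt n \<omega>)"
    then have lt: "cnt n \<omega> < 2^n" using Etop that by (metis not_less)
    have "{..cnt n \<omega>} \<subseteq> {j. j < (2::nat)^n \<and> \<omega> \<notin> ?E n j}"
      using nin Emono lt by auto
    then have "card {..cnt n \<omega>} \<le> cnt n \<omega>" unfolding cnt_def
      by (intro card_mono) auto
    then show False by simp
  qed
  define V where "V \<omega> = (INF n. g n \<omega>)" for \<omega>
  have Vmeas: "V \<in> borel_measurable M" unfolding V_def using gmeas by measurable
  have g_nonneg: "0 \<le> g n \<omega>" for n \<omega> unfolding g_def by (auto intro!: sum_nonneg divide_nonneg_nonneg)
  have bdd: "bdd_below (range (\<lambda>n. g n \<omega>))" for \<omega> using g_nonneg by (intro bdd_belowI) auto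
  have V_le: "V \<omega> \<le> g n \<omega>" for n \<omega> unfolding V_def by (rule cINF_lower[OF bdd]) auto
  have V_nonneg: "0 \<le> V \<omega>" for \<omega> unfolding V_def using g_nonneg by (intro cINF_greatest) auto
  have V_le1: "V \<omega> \<le> 1" if "\<omega> \<in> space M" for \<omega>
    using V_le[of \<omega> 0] g_cnt[OF that, of 0] cnt_top[of 0 \<omega>] by simp
  have V_le_k: "V \<omega> \<le> real k / 2^n" if "\<omega> \<in> ?E n k" "\<omega> \<in> space M" for \<omega> n k
    using V_le[of \<omega> n] g_cnt[OF that(2), of n] cnt_le[OF that(1)]
    by (smt (verit, ccfv_SIG) divide_right_mono of_nat_mono zero_le_power)
  have V_lt: "\<omega> \<in> ?E n k" if w: "\<omega> \<in> C" "\<omega> \<in> space M" "V \<omega> < real k / 2^n" for \<omega> n k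
  proof -
    obtain m where m: "g m \<omega> < real k / 2^n"
      using w(3) unfolding V_def by (subst (asm) cInf_less_iff) (auto intro: bdd)
    then have "real (cnt m \<omega>) / 2^m < real k / 2^n" using g_cnt[OF w(2)] by simp
    then have "real (cnt m \<omega>) * 2^n < real k * 2^m" by (simp add: field_simps)
    then have "cnt m \<omega> * 2^n \<le> k * 2^m"
      by (metis (mono_tags, opaque_lifting) less_imp_le of_nat_less_iff of_nat_mult of_nat_numeral of_nat_power)
    then show ?thesis using Ecross in_cnt[OF w(1)] by blast
  qed
  have cdf: "prob (C \<inter> {\<omega>\<in>space M. V \<omega> \<le> x}) = x * prob C" if x: "0 \<le> x" "x \<le> 1" for x
  proof -
    let ?S = "C \<inter> {\<omega>\<in>space M. V \<omega> \<le> x}"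
    have Sev: "?S \<in> events" using C Vmeas by measurable
    have bound: "\<bar>prob ?S - x * prob C\<bar> \<le> prob C / 2^n" for n
    proof -
      define k where "k = nat \<lfloor>x * 2^n\<rfloor>"
      have x0: "0 \<le> x * 2^n" using x by simp
      have k1: "real k \<le> x * 2^n" "x * 2^n < real k + 1"
        using x0 unfolding k_def by simp_all
      have kle: "k \<le> 2^n"
      proof -
        have "real k \<le> 2^n" using k1 x by (smt (verit) mult_left_le_one_le zero_le_power)
        then show ?thesis by (metis of_nat_le_iff of_nat_numeral of_nat_power)
      qed
      have s1: "?E n k \<subseteq> ?S"
      proof
        fix \<omega> assume w: "\<omega> \<in> ?E n k"
        then have "\<omega> \<in> space M" "\<omega> \<in> C" using Eev sets.sets_into_space by blast+
        moreover have "V \<omega> \<le> x"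
        proof -
          have "V \<omega> \<le> real k / 2^n" using V_le_k[OF w \<open>\<omega> \<in> space M\<close>] .
          also have "real k / 2^n \<le> x" using k1(1) by (simp add: divide_le_eq)
          finally show ?thesis .
        qed
        ultimately show "\<omega> \<in> ?S" by simp
      qed
      have s2: "?S \<subseteq> ?E n (k + 1)"
      proof
        fix \<omega> assume w: "\<omega> \<in> ?S"
        have "x < real (k + 1) / 2^n" using k1(2) by (simp add: less_divide_eq)
        then have "V \<omega> < real (k + 1) / 2^n" using w by simp
        then show "\<omega> \<in> ?E n (k+1)" using V_lt w by blast
      qed
      have p1: "real k / 2^n * prob C \<le> prob ?S"
        using finite_measure_mono[OF s1 Sev] Eprob[OF kle] by simp
      have p2: "prob ?S \<le> real (k + 1) / 2^n * prob C"
      proof (cases "k + 1 \<le> 2^n")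
        case True then show ?thesis using finite_measure_mono[OF s2 Eev(1)] Eprob[OF True] by simp
      next
        case False
        then have "?E n (k+1) = C" using Etop by simp
        then have "prob ?S \<le> prob C" using finite_measure_mono[OF s2 Eev(1)] by simp
        also have "\<dots> \<le> real (k + 1) / 2^n * prob C"
        proof -
          have "(2::real)^n \<le> real (k+1)" using False
            by (metis less_imp_le not_le of_nat_le_iff of_nat_numeral of_nat_power)
          then have "1 \<le> real (k + 1) / 2^n" by simp
          then show ?thesis using mult_right_mono[of 1 "real (k + 1) / 2^n" "prob C"] by simp
        qed
        finally show ?thesis .
      qed
      have q1: "real k / 2^n * prob C \<le> x * prob C"
        using k1 by (intro mult_right_mono) (auto simp: field_simps)
      have q2: "x * prob C \<le> real (k+1) / 2^n * prob C"
        using k1 by (intro mult_right_mono) (auto simp: field_simps)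
      have "real (k+1) / 2^n * prob C - real k / 2^n * prob C = prob C / 2^n"
        by (simp add: field_simps)
      then show ?thesis using p1 p2 q1 q2 by linarith
    qed
    show ?thesis
    proof (rule ccontr)
      assume ne: "prob ?S \<noteq> x * prob C"
      then have pos: "0 < \<bar>prob ?S - x * prob C\<bar>" by simp
      obtain n where "prob C / \<bar>prob ?S - x * prob C\<bar> < 2^n"
        using real_arch_pow[of 2] by fastforce
      then have "prob C / 2^n < \<bar>prob ?S - x * prob C\<bar>" using pos
        by (simp add: field_simps)
      then show False using bound[of n] by simp
    qed
  qed
  show ?thesis using Vmeas V_nonneg V_le1 cdf by blast
qed

end

definition Unif :: "real measure" where
  "Unif = distr (restrict_space lborel {0<..<1::real}) borel (\<lambda>x. x)"

lemma id_meas_u: "(\<lambda>x. x) \<in> borel_measurable (restrict_space lborel {0<..<1::real})"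
  by (rule measurable_restrict_space1) simp

lemma Omega_u_prob: "prob_space (restrict_space lborel {0<..<1::real})"
  by (auto simp add: emeasure_restrict_space space_restrict_space intro!: prob_spaceI)

lemma Unif_real_distribution: "real_distribution Unif"
proof -
  interpret prob_space "restrict_space lborel {0<..<1::real}" by (rule Omega_u_prob)
  show ?thesis unfolding Unif_def real_distribution_def real_distribution_axioms_def
    by (auto intro!: prob_space_distr id_meas_u)
qed

lemma cdf_Unif: "cdf Unif x = max 0 (min 1 x)"
proof -
  have "cdf Unif x = measure (restrict_space lborel {0<..<1::real}) ({..x} \<inter> {0<..<1})"
    unfolding cdf_def Unif_def
    by (subst measure_distr[OF id_meas_u]) (auto simp: space_restrict_space vimage_def Int_def)
  also have "\<dots> = measure lborel ({..x} \<inter> {0<..<1})"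
    by (subst measure_restrict_space) auto
  also have "\<dots> = max 0 (min 1 x)"
  proof (cases "x \<le> 0")
    case True then have "{..x} \<inter> {0<..<1} = {}" by auto
    then show ?thesis using True by simp
  next
    case False
    show ?thesis
    proof (cases "x < 1")
      case True then have "{..x} \<inter> {0<..<1} = {0<..x}" by auto
      then show ?thesis using True False by simp
    next
      case False2: False
      then have "{..x} \<inter> {0<..<1} = {0<..<1}" by auto
      then show ?thesis using False2 by simp
    qed
  qed
  finally show ?thesis .
qed

context prob_space begin

lemma piece_prob:
  assumes C: "C \<in> events" and Vm: "V \<in> borel_measurable M"
    and V01: "\<forall>\<omega>\<in>space M. 0 \<le> V \<omega> \<and> V \<omega> \<le> 1"
    and Vc: "\<forall>x. 0 \<le> x \<longrightarrow> x \<le> 1 \<longrightarrow> prob (C \<inter> {\<omega>\<in>space M. V \<omega> \<le> x}) = x * prob C"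
    and l: "0 < l"
  shows "prob (C \<inter> {\<omega>\<in>space M. a + l * V \<omega> \<le> x}) = prob C * max 0 (min 1 ((x - a) / l))"
proof -
  have eq: "{\<omega>\<in>space M. a + l * V \<omega> \<le> x} = {\<omega>\<in>space M. V \<omega> \<le> (x - a) / l}"
    using l by (auto simp: field_simps)
  show ?thesis
  proof (cases "(x - a) / l < 0")
    case True
    then have "C \<inter> {\<omega>\<in>space M. V \<omega> \<le> (x - a) / l} = {}" using V01 by force
    then show ?thesis using True eq by simp
  next
    case False
    show ?thesis
    proof (cases "(x - a) / l \<le> 1")
      case True then show ?thesis using False eq Vc by (simp add: mult.commute)
    next
      case False2: False
      then have "C \<inter> {\<omega>\<in>space M. V \<omega> \<le> (x - a) / l} = C" using V01 C sets.sets_into_space by force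
      then show ?thesis using False2 eq by simp
    qed
  qed
qed

lemma glue_uniform:
  assumes A: "A \<in> events" and B: "B \<in> events" and AB: "A \<inter> B = {}"
    and pA: "prob A = d" and pB: "prob B = d" and d: "0 < d" "d < 1/2"
    and VA: "VA \<in> borel_measurable M" "\<forall>\<omega>\<in>space M. 0 \<le> VA \<omega> \<and> VA \<omega> \<le> 1"
       "\<forall>x. 0 \<le> x \<longrightarrow> x \<le> 1 \<longrightarrow> prob (A \<inter> {\<omega>\<in>space M. VA \<omega> \<le> x}) = x * prob A"
    and VB: "VB \<in> borel_measurable M" "\<forall>\<omega>\<in>space M. 0 \<le> VB \<omega> \<and> VB \<omega> \<le> 1"
       "\<forall>x. 0 \<le> x \<longrightarrow> x \<le> 1 \<longrightarrow> prob (B \<inter> {\<omega>\<in>space M. VB \<omega> \<le> x}) = x * prob B"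
    and VR: "VR \<in> borel_measurable M" "\<forall>\<omega>\<in>space M. 0 \<le> VR \<omega> \<and> VR \<omega> \<le> 1"
       "\<forall>x. 0 \<le> x \<longrightarrow> x \<le> 1 \<longrightarrow> prob ((space M - (A \<union> B)) \<inter> {\<omega>\<in>space M. VR \<omega> \<le> x}) = x * prob (space M - (A \<union> B))"
  shows "distr M borel (\<lambda>\<omega>. if \<omega> \<in> A then d * VA \<omega> else if \<omega> \<in> B then 1 - d + d * VB \<omega>
           else d + (1 - 2 * d) * VR \<omega>) = Unif" (is "distr M borel ?U = _")
proof -
  let ?R = "space M - (A \<union> B)"
  have R: "?R \<in> events" using A B by auto
  have pR: "prob ?R = 1 - 2 * d"
  proof -
    have "prob (A \<union> B) = 2 * d" using A B AB pA pB by (subst finite_measure_Union) auto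
    then show ?thesis using A B by (simp add: prob_compl)
  qed
  have Um: "?U \<in> borel_measurable M" using A B VA(1) VB(1) VR(1) by measurable
  have cl: "cdf (distr M borel ?U) x = max 0 (min 1 x)" for x
  proof -
    have "cdf (distr M borel ?U) x = prob {\<omega>\<in>space M. ?U \<omega> \<le> x}"
    proof -
      have "?U -` {..x} \<inter> space M = {\<omega>\<in>space M. ?U \<omega> \<le> x}" by auto
      then show ?thesis unfolding cdf_def by (simp add: measure_distr[OF Um])
    qed
    also have "{\<omega>\<in>space M. ?U \<omega> \<le> x} =
        (A \<inter> {\<omega>\<in>space M. 0 + d * VA \<omega> \<le> x}) \<union> ((B \<inter> {\<omega>\<in>space M. (1 - d) + d * VB \<omega> \<le> x})
         \<union> (?R \<inter> {\<omega>\<in>space M. d + (1 - 2 * d) * VR \<omega> \<le> x}))"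
      using AB A B sets.sets_into_space by auto
    also have "prob \<dots> = prob (A \<inter> {\<omega>\<in>space M. 0 + d * VA \<omega> \<le> x}) +
        (prob (B \<inter> {\<omega>\<in>space M. (1 - d) + d * VB \<omega> \<le> x})
         + prob (?R \<inter> {\<omega>\<in>space M. d + (1 - 2 * d) * VR \<omega> \<le> x}))"
      using A B R AB VA(1) VB(1) VR(1)
      by (subst finite_measure_Union, measurable, blast, subst finite_measure_Union, measurable, blast, simp)
    also have "\<dots> = d * max 0 (min 1 ((x - 0) / d)) + (d * max 0 (min 1 ((x - (1 - d)) / d))
         + (1 - 2 * d) * max 0 (min 1 ((x - d) / (1 - 2 * d))))"
      using piece_prob[OF A VA, of d 0 x] piece_prob[OF B VB, of d "1 - d" x]
        piece_prob[OF R VR, of "1 - 2 * d" d x] d pA pB pR by simp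
    also have "\<dots> = max 0 (min 1 x)"
    proof -
      consider "x < 0" | "0 \<le> x" "x \<le> d" | "d \<le> x" "x \<le> 1 - d" | "1 - d \<le> x" "x \<le> 1" | "1 < x"
        by linarith
      then show ?thesis
      proof cases
        case 1 then show ?thesis using d by (simp add: field_simps)
      next
        case 2
        have "(x - (1 - d)) / d \<le> 0" using 2 d by (simp add: divide_le_0_iff)
        moreover have "(x - d) / (1 - 2 * d) \<le> 0" using 2 d by (simp add: divide_le_0_iff)
        moreover have "x / d \<le> 1" using 2 d by simp
        ultimately show ?thesis using 2 d by (simp add: max_def min_def)
      next
        case 3
        have "(x - (1 - d)) / d \<le> 0" using 3 d by (simp add: divide_le_0_iff)
        moreover have "0 \<le> (x - d) / (1 - 2 * d)" "(x - d) / (1 - 2 * d) \<le> 1" using 3 d by simp_all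
        moreover have "1 \<le> x / d" using 3 d by simp
        ultimately show ?thesis using 3 d by (simp add: max_def min_def field_simps)
      next
        case 4
        have "0 \<le> (x - (1 - d)) / d" "(x - (1 - d)) / d \<le> 1" using 4 d by simp_all
        moreover have "1 \<le> (x - d) / (1 - 2 * d)" using 4 d by simp
        moreover have "1 \<le> x / d" using 4 d by simp
        ultimately show ?thesis using 4 d by (simp add: max_def min_def field_simps)
      next
        case 5
        have "1 \<le> (x - (1 - d)) / d" using 5 d by simp
        moreover have "1 \<le> (x - d) / (1 - 2 * d)" using 5 d by simp
        moreover have "1 \<le> x / d" using 5 d by simp
        ultimately show ?thesis using 5 d by (simp add: max_def min_def field_simps)
      qed
    qed
    finally show ?thesis .
  qed
  show ?thesis
    by (rule cdf_unique) (use Um Unif_real_distribution cl cdf_Unif in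
        \<open>auto intro!: real_distribution_distr\<close>)
qed

end

lemma quantile_exists:
  fixes \<mu> :: "real measure"
  assumes "real_distribution \<mu>"
  shows "\<exists>Q. Q \<in> borel_measurable borel \<and> mono_on {0<..<1} Q \<and> distr Unif borel Q = \<mu>"
proof -
  interpret m: cdf_distribution \<mu> using assms by (simp add: cdf_distribution_def)
  define Q where "Q u = (if u \<in> {0<..<1::real} then Inf {x. u \<le> cdf \<mu> x} else 0)" for u
  have Qm: "Q \<in> borel_measurable borel"
    unfolding Q_def using m.measurable_CI
    by (subst measurable_restrict_space_iff[symmetric]) auto
  have mono: "mono_on {0<..<1} Q"
    using m.mono_I unfolding mono_on_def Q_def by auto
  have "distr Unif borel Q = distr (restrict_space lborel {0<..<1::real}) borel (\<lambda>u. Q u)"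
    unfolding Unif_def by (subst distr_distr) (auto intro: Qm id_meas_u simp: comp_def)
  also have "\<dots> = distr (restrict_space lborel {0<..<1::real}) borel (\<lambda>u. Inf {x. u \<le> cdf \<mu> x})"
    by (rule distr_cong) (auto simp: Q_def space_restrict_space)
  also have "\<dots> = \<mu>" by (rule m.distr_I_eq_M)
  finally show ?thesis using Qm mono by blast
qed

lemma Unif_AE: "AE u in Unif. u \<in> {0<..<1}"
  unfolding Unif_def by (subst AE_distr_iff) (auto intro: id_meas_u simp: space_restrict_space)

context prob_space begin

lemma Y_pos_neg:
  fixes Y :: "'a \<Rightarrow> real"
  assumes Y: "integrable M Y" and Y0: "expectation Y = 0" and nz: "\<not> (AE \<omega> in M. Y \<omega> = 0)"
  shows "0 < prob {\<omega>\<in>space M. 0 < Y \<omega>}" "0 < prob {\<omega>\<in>space M. Y \<omega> < 0}"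
proof -
  have Ym[measurable]: "Y \<in> borel_measurable M" using Y by auto
  show "0 < prob {\<omega>\<in>space M. 0 < Y \<omega>}"
  proof (rule ccontr)
    assume "\<not> 0 < prob {\<omega>\<in>space M. 0 < Y \<omega>}"
    then have "prob {\<omega>\<in>space M. 0 < Y \<omega>} = 0" using measure_nonneg[of M] by (meson not_less order_antisym)
    moreover have S: "{\<omega>\<in>space M. 0 < Y \<omega>} \<in> events"
    proof -
      have "{\<omega>\<in>space M. 0 < Y \<omega>} = Y -` {0<..} \<inter> space M" by auto
      moreover have "Y -` {0<..} \<inter> space M \<in> events" by (rule measurable_sets[OF Ym]) auto
      ultimately show ?thesis by simp
    qed
    ultimately have "{\<omega>\<in>space M. 0 < Y \<omega>} \<in> null_sets M" by (auto simp: null_sets_def emeasure_eq_measure)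
    then have "AE \<omega> in M. \<not> 0 < Y \<omega>" by (rule AE_I') auto
    then have ae: "AE \<omega> in M. 0 \<le> - Y \<omega>" by auto
    have "(\<integral>\<omega>. - Y \<omega> \<partial>M) = 0" using Y0 by simp
    then have "AE \<omega> in M. - Y \<omega> = 0" using integral_nonneg_eq_0_iff_AE[of M "\<lambda>\<omega>. - Y \<omega>"] Y ae by auto
    then show False using nz by auto
  qed
  show "0 < prob {\<omega>\<in>space M. Y \<omega> < 0}"
  proof (rule ccontr)
    assume "\<not> 0 < prob {\<omega>\<in>space M. Y \<omega> < 0}"
    then have "prob {\<omega>\<in>space M. Y \<omega> < 0} = 0" using measure_nonneg[of M] by (meson not_less order_antisym)
    moreover have S: "{\<omega>\<in>space M. Y \<omega> < 0} \<in> events"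
    proof -
      have "{\<omega>\<in>space M. Y \<omega> < 0} = Y -` {..<0} \<inter> space M" by auto
      moreover have "Y -` {..<0} \<inter> space M \<in> events" by (rule measurable_sets[OF Ym]) auto
      ultimately show ?thesis by simp
    qed
    ultimately have "{\<omega>\<in>space M. Y \<omega> < 0} \<in> null_sets M" by (auto simp: null_sets_def emeasure_eq_measure)
    then have "AE \<omega> in M. \<not> Y \<omega> < 0" by (rule AE_I') auto
    then have ae: "AE \<omega> in M. 0 \<le> Y \<omega>" by auto
    then have "AE \<omega> in M. Y \<omega> = 0" using integral_nonneg_eq_0_iff_AE[of M Y] Y Y0 by auto
    then show False using nz by auto
  qed
qed

end

context prob_space begin

lemma rearr_separates:
  fixes Z Y :: "'a \<Rightarrow> real"
  assumes na: "nonatomic M" and Zm: "Z \<in> borel_measurable M"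
    and nc: "\<not> (\<exists>c. AE \<omega> in M. Z \<omega> = c)"
    and Y: "integrable M Y" and Y0: "(\<integral>\<omega>. Y \<omega> \<partial>M) = 0" and nz: "\<not> (AE \<omega> in M. Y \<omega> = 0)"
  shows "\<exists>Z1 Z2. Z1 \<in> borel_measurable M \<and> Z2 \<in> borel_measurable M \<and>
     distr M borel Z1 = distr M borel Z \<and> distr M borel Z2 = distr M borel Z \<and>
     (integrable M (\<lambda>\<omega>. Z1 \<omega> * Y \<omega>) \<longrightarrow> integrable M (\<lambda>\<omega>. Z2 \<omega> * Y \<omega>) \<longrightarrow>
        (\<integral>\<omega>. Z1 \<omega> * Y \<omega> \<partial>M) \<noteq> (\<integral>\<omega>. Z2 \<omega> * Y \<omega> \<partial>M))"
proof -
  have Ym[measurable]: "Y \<in> borel_measurable M" using Y by auto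
  have "real_distribution (distr M borel Z)" using Zm by (intro real_distribution_distr) auto
  then obtain Q where Qm[measurable]: "Q \<in> borel_measurable borel" and mono: "mono_on {0<..<1} Q"
    and Qd: "distr Unif borel Q = distr M borel Z"
    using quantile_exists by blast
  have monoD: "Q u \<le> Q v" if "0 < u" "u \<le> v" "v < 1" for u v
    using mono_onD[OF mono, of u v] that by auto
  have "\<exists>d0. 0 < d0 \<and> d0 < 1/2 \<and> Q d0 < Q (1 - d0)"
  proof (rule ccontr)
    assume nex: "\<not> (\<exists>d0. 0 < d0 \<and> d0 < 1/2 \<and> Q d0 < Q (1 - d0))"
    have H: "Q (1 - d) \<le> Q d" if hd: "0 < d" "d < 1/2" for d
      using nex hd by (meson not_less)
    have Qc: "Q u = Q (1/2)" if "0 < u" "u < 1" for u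
    proof -
      consider "u < 1/2" | "u = 1/2" | "1/2 < u" by linarith
      then show ?thesis
      proof cases
        case 1
        have "Q u \<le> Q (1/2)" "Q (1/2) \<le> Q (1 - u)" using 1 that by (auto intro!: monoD)
        then show ?thesis using H[of u] 1 that by linarith
      next
        case 3
        have "Q (1 - u) \<le> Q (1/2)" "Q (1/2) \<le> Q u" using 3 that by (auto intro!: monoD)
        then show ?thesis using H[of "1 - u"] 3 that by auto
      next
        case 2 then show ?thesis by (rule arg_cong)
      qed
    qed
    have QmU: "Q \<in> borel_measurable Unif"
      using Qm by (subst measurable_cong_sets[of Unif borel borel borel]) (simp_all add: Unif_def)
    have "AE u in Unif. Q u = Q (1/2)" using Unif_AE by eventually_elim (meson greaterThanLessThan_iff Qc)
    then have "AE x in distr Unif borel Q. x = Q (1/2)"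
      using AE_distr_iff[OF QmU, of "\<lambda>x. x = Q (1/2)"] by simp
    then have "AE x in distr M borel Z. x = Q (1/2)" using Qd by metis
    then show False using nc AE_distr_iff[OF Zm, of "\<lambda>x. x = Q (1/2)"] by auto
  qed
  then obtain d0 where d0: "0 < d0" "d0 < 1/2" "Q d0 < Q (1 - d0)" by blast
  let ?P = "{\<omega>\<in>space M. 0 < Y \<omega>}" and ?N = "{\<omega>\<in>space M. Y \<omega> < 0}"
  have PN: "0 < prob ?P" "0 < prob ?N" using Y_pos_neg[OF Y _ nz] Y0 by auto
  have Pev: "?P \<in> events" "?N \<in> events" by measurable
  define d where "d = min d0 (min (prob ?P) (prob ?N))"
  have d: "0 < d" "d < 1/2" "d \<le> prob ?P" "d \<le> prob ?N" "d \<le> d0"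
    using d0 PN unfolding d_def by auto
  have gap: "Q d < Q (1 - d)"
  proof -
    have "Q d \<le> Q d0" using d d0 by (intro monoD) auto
    also have "\<dots> < Q (1 - d0)" by (rule d0(3))
    also have "\<dots> \<le> Q (1 - d)" using d d0 by (intro monoD) auto
    finally show ?thesis .
  qed
  obtain A where A: "A \<in> events" "A \<subseteq> ?P" "prob A = d"
    using sierpinski[OF na Pev(1), of d] d by auto
  obtain B where B: "B \<in> events" "B \<subseteq> ?N" "prob B = d"
    using sierpinski[OF na Pev(2), of d] d by auto
  have AB: "A \<inter> B = {}" "B \<inter> A = {}" using A(2) B(2) by force+
  let ?R = "space M - (A \<union> B)"
  have Rev: "?R \<in> events" using A B by auto
  obtain VA where VA: "VA \<in> borel_measurable M" "\<forall>\<omega>\<in>space M. 0 \<le> VA \<omega> \<and> VA \<omega> \<le> 1"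
       "\<forall>x. 0 \<le> x \<longrightarrow> x \<le> 1 \<longrightarrow> prob (A \<inter> {\<omega>\<in>space M. VA \<omega> \<le> x}) = x * prob A"
    using cond_uniform[OF na A(1)] by blast
  obtain VB where VB: "VB \<in> borel_measurable M" "\<forall>\<omega>\<in>space M. 0 \<le> VB \<omega> \<and> VB \<omega> \<le> 1"
       "\<forall>x. 0 \<le> x \<longrightarrow> x \<le> 1 \<longrightarrow> prob (B \<inter> {\<omega>\<in>space M. VB \<omega> \<le> x}) = x * prob B"
    using cond_uniform[OF na B(1)] by blast
  obtain VR where VR: "VR \<in> borel_measurable M" "\<forall>\<omega>\<in>space M. 0 \<le> VR \<omega> \<and> VR \<omega> \<le> 1"
       "\<forall>x. 0 \<le> x \<longrightarrow> x \<le> 1 \<longrightarrow> prob (?R \<inter> {\<omega>\<in>space M. VR \<omega> \<le> x}) = x * prob ?R"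
    using cond_uniform[OF na Rev] by blast
  define U1 where "U1 \<omega> = (if \<omega> \<in> A then d * VA \<omega> else if \<omega> \<in> B then 1 - d + d * VB \<omega>
           else d + (1 - 2 * d) * VR \<omega>)" for \<omega>
  define U2 where "U2 \<omega> = (if \<omega> \<in> B then d * VB \<omega> else if \<omega> \<in> A then 1 - d + d * VA \<omega>
           else d + (1 - 2 * d) * VR \<omega>)" for \<omega>
  have U1d: "distr M borel U1 = Unif"
    unfolding U1_def by (rule glue_uniform[OF A(1) B(1) AB(1) A(3) B(3) d(1,2) VA VB VR])
  have VR': "\<forall>x. 0 \<le> x \<longrightarrow> x \<le> 1 \<longrightarrow> prob ((space M - (B \<union> A)) \<inter> {\<omega>\<in>space M. VR \<omega> \<le> x}) = x * prob (space M - (B \<union> A))"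
    using VR(3) by (simp add: Un_commute)
  have U2d: "distr M borel U2 = Unif"
    unfolding U2_def by (rule glue_uniform[OF B(1) A(1) AB(2) B(3) A(3) d(1,2) VB VA VR(1,2) VR'])
  have U1m[measurable]: "U1 \<in> borel_measurable M" unfolding U1_def using A(1) B(1) VA(1) VB(1) VR(1) by measurable
  have U2m[measurable]: "U2 \<in> borel_measurable M" unfolding U2_def using A(1) B(1) VA(1) VB(1) VR(1) by measurable
  define Z1 where "Z1 \<omega> = Q (U1 \<omega>)" for \<omega>
  define Z2 where "Z2 \<omega> = Q (U2 \<omega>)" for \<omega>
  have Z1m: "Z1 \<in> borel_measurable M" unfolding Z1_def by measurable
  have Z2m: "Z2 \<in> borel_measurable M" unfolding Z2_def by measurable
  have Z1d: "distr M borel Z1 = distr M borel Z"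
    unfolding Z1_def using distr_distr[OF Qm U1m] U1d Qd by (simp add: comp_def)
  have Z2d: "distr M borel Z2 = distr M borel Z"
    unfolding Z2_def using distr_distr[OF Qm U2m] U2d Qd by (simp add: comp_def)
  have AE1: "AE \<omega> in M. U1 \<omega> \<in> {0<..<1}"
  proof -
    have "AE u in distr M borel U1. u \<in> {0<..<1}" unfolding U1d by (rule Unif_AE)
    then show ?thesis by (subst (asm) AE_distr_iff) auto
  qed
  have AE2: "AE \<omega> in M. U2 \<omega> \<in> {0<..<1}"
  proof -
    have "AE u in distr M borel U2. u \<in> {0<..<1}" unfolding U2d by (rule Unif_AE)
    then show ?thesis by (subst (asm) AE_distr_iff) auto
  qed
  define g where "g = Q (1 - d) - Q d"
  have g: "0 < g" using gap unfolding g_def by simp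
  have pw: "AE \<omega> in M. Z1 \<omega> * Y \<omega> - Z2 \<omega> * Y \<omega> \<le> - g * (indicator A \<omega> * Y \<omega>)"
    using AE1 AE2
  proof eventually_elim
    case (elim \<omega>)
    show ?case
    proof (cases "\<omega> \<in> A")
      case True
      then have w: "\<omega> \<in> space M" "0 < Y \<omega>" using A(2) by auto
      have "U1 \<omega> \<le> d" using True VA(2) w d unfolding U1_def by (simp add: mult_le_cancel_left1)
      then have q1: "Z1 \<omega> \<le> Q d" unfolding Z1_def using elim d by (intro monoD) auto
      have "1 - d \<le> U2 \<omega>" using True AB VA(2) w d unfolding U2_def by auto
      then have q2: "Q (1 - d) \<le> Z2 \<omega>" unfolding Z2_def using elim d by (intro monoD) auto
      have "(Z1 \<omega> - Z2 \<omega>) * Y \<omega> \<le> (Q d - Q (1 - d)) * Y \<omega>"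
        using q1 q2 w by (intro mult_right_mono) auto
      then show ?thesis using True unfolding g_def by (simp add: algebra_simps)
    next
      case nA: False
      show ?thesis
      proof (cases "\<omega> \<in> B")
        case True
        then have w: "\<omega> \<in> space M" "Y \<omega> < 0" using B(2) by auto
        have "1 - d \<le> U1 \<omega>" using True nA VB(2) w d unfolding U1_def by auto
        then have q1: "Q (1 - d) \<le> Z1 \<omega>" unfolding Z1_def using elim d by (intro monoD) auto
        have "U2 \<omega> \<le> d" using True VB(2) w d unfolding U2_def by (simp add: mult_le_cancel_left1)
        then have q2: "Z2 \<omega> \<le> Q d" unfolding Z2_def using elim d by (intro monoD) auto
        have "0 \<le> Z1 \<omega> - Z2 \<omega>" using q1 q2 gap by linarith
        then have "(Z1 \<omega> - Z2 \<omega>) * Y \<omega> \<le> 0" using w by (simp add: mult_nonneg_nonpos)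
        then show ?thesis using nA by (simp add: algebra_simps)
      next
        case False
        then show ?thesis using nA unfolding Z1_def Z2_def U1_def U2_def by simp
      qed
    qed
  qed
  have IA: "integrable M (\<lambda>\<omega>. indicator A \<omega> * Y \<omega>)"
    using integrable_real_mult_indicator[OF A(1) Y] by (simp add: mult.commute)
  have IApos: "0 < (\<integral>\<omega>. indicator A \<omega> * Y \<omega> \<partial>M)"
  proof -
    have nn: "AE \<omega> in M. 0 \<le> indicator A \<omega> * Y \<omega>"
      by (rule AE_I2) (use A(2) in \<open>auto simp: indicator_def\<close>)
    have "(\<integral>\<omega>. indicator A \<omega> * Y \<omega> \<partial>M) \<noteq> 0"
    proof
      assume "(\<integral>\<omega>. indicator A \<omega> * Y \<omega> \<partial>M) = 0"
      then have "AE \<omega> in M. indicator A \<omega> * Y \<omega> = 0"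
        using integral_nonneg_eq_0_iff_AE[OF IA nn] by simp
      then have "AE \<omega> in M. \<omega> \<notin> A"
        by eventually_elim (use A(2) in \<open>auto simp: indicator_def\<close>)
      then have "emeasure M A = 0"
        using AE_iff_measurable[OF A(1), of "\<lambda>\<omega>. \<omega> \<notin> A"] A(1) sets.sets_into_space by auto
      then show False using A(3) d by (simp add: emeasure_eq_measure)
    qed
    moreover have "0 \<le> (\<integral>\<omega>. indicator A \<omega> * Y \<omega> \<partial>M)" using nn by (rule integral_nonneg_AE)
    ultimately show ?thesis by simp
  qed
  show ?thesis
  proof (intro exI conjI impI)
    assume I1: "integrable M (\<lambda>\<omega>. Z1 \<omega> * Y \<omega>)" and I2: "integrable M (\<lambda>\<omega>. Z2 \<omega> * Y \<omega>)"
    have "(\<integral>\<omega>. Z1 \<omega> * Y \<omega> - Z2 \<omega> * Y \<omega> \<partial>M) \<le> (\<integral>\<omega>. - g * (indicator A \<omega> * Y \<omega>) \<partial>M)"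
      using I1 I2 IA pw by (intro integral_mono_AE) auto
    also have "\<dots> = - g * (\<integral>\<omega>. indicator A \<omega> * Y \<omega> \<partial>M)" by simp
    also have "\<dots> < 0" using g IApos by (simp add: mult_pos_pos)
    finally have "(\<integral>\<omega>. Z1 \<omega> * Y \<omega> - Z2 \<omega> * Y \<omega> \<partial>M) < 0" .
    then show "(\<integral>\<omega>. Z1 \<omega> * Y \<omega> \<partial>M) \<noteq> (\<integral>\<omega>. Z2 \<omega> * Y \<omega> \<partial>M)"
      using I1 I2 by simp
  qed (use Z1m Z2m Z1d Z2d in auto)
qed

end

lemma weak_top_open:
  "openin (weak_top M XX XXs) U \<longleftrightarrow> U \<subseteq> XX \<and> (\<forall>X\<in>U. \<exists>F \<epsilon>. finite F \<and> F \<subseteq> XXs \<and> \<epsilon> > 0 \<and>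
      {X'\<in>XX. \<forall>Y\<in>F. \<bar>(\<integral>\<omega>. X' \<omega> * Y \<omega> \<partial>M) - (\<integral>\<omega>. X \<omega> * Y \<omega> \<partial>M)\<bar> < \<epsilon>} \<subseteq> U)"
proof -
  let ?N = "\<lambda>X F \<epsilon>. {X'\<in>XX. \<forall>Y\<in>F. \<bar>(\<integral>\<omega>. X' \<omega> * Y \<omega> \<partial>M) - (\<integral>\<omega>. X \<omega> * Y \<omega> \<partial>M)\<bar> < \<epsilon>}"
  let ?L = "\<lambda>U. U \<subseteq> XX \<and> (\<forall>X\<in>U. \<exists>F \<epsilon>. finite F \<and> F \<subseteq> XXs \<and> \<epsilon> > 0 \<and> ?N X F \<epsilon> \<subseteq> U)"
  have "istopology ?L"
    unfolding istopology_def
  proof (rule conjI; intro allI impI)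
    fix S T assume S: "?L S" and T: "?L T"
    show "?L (S \<inter> T)"
    proof (rule conjI)
      show "S \<inter> T \<subseteq> XX" using conjunct1[OF S] by blast
    next
      show "\<forall>X\<in>S \<inter> T. \<exists>F \<epsilon>. finite F \<and> F \<subseteq> XXs \<and> \<epsilon> > 0 \<and> ?N X F \<epsilon> \<subseteq> S \<inter> T"
      proof (rule ballI)
      fix X assume X: "X \<in> S \<inter> T"
      obtain F1 e1 where 1: "finite F1" "F1 \<subseteq> XXs" "e1 > 0" "?N X F1 e1 \<subseteq> S"
        using bspec[OF conjunct2[OF S] IntD1[OF X]] by (elim exE conjE)
      obtain F2 e2 where 2: "finite F2" "F2 \<subseteq> XXs" "e2 > 0" "?N X F2 e2 \<subseteq> T"
        using bspec[OF conjunct2[OF T] IntD2[OF X]] by (elim exE conjE)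
      have "?N X (F1 \<union> F2) (min e1 e2) \<subseteq> ?N X F1 e1" "?N X (F1 \<union> F2) (min e1 e2) \<subseteq> ?N X F2 e2"
        by (auto intro!: Collect_mono)
      then have "?N X (F1 \<union> F2) (min e1 e2) \<subseteq> S \<inter> T" using 1(4) 2(4) by (meson Int_greatest order_trans)
      moreover have "finite (F1 \<union> F2)" "F1 \<union> F2 \<subseteq> XXs" "min e1 e2 > 0"
        using 1(1,2,3) 2(1,2,3) by simp_all
      ultimately show "\<exists>F \<epsilon>. finite F \<and> F \<subseteq> XXs \<and> \<epsilon> > 0 \<and> ?N X F \<epsilon> \<subseteq> S \<inter> T"
        by (intro exI[of _ "F1 \<union> F2"] exI[of _ "min e1 e2"] conjI)
    qed
    qed
  next
    fix K assume K: "\<forall>U\<in>K. ?L U"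
    show "?L (\<Union>K)"
    proof (rule conjI)
      show "\<Union>K \<subseteq> XX" using K by (meson Sup_least)
    next
      show "\<forall>X\<in>\<Union>K. \<exists>F \<epsilon>. finite F \<and> F \<subseteq> XXs \<and> \<epsilon> > 0 \<and> ?N X F \<epsilon> \<subseteq> \<Union>K"
      proof (rule ballI)
      fix X assume "X \<in> \<Union>K"
      then obtain U where U: "U \<in> K" "X \<in> U" by blast
      then obtain F e where "finite F" "F \<subseteq> XXs" "e > 0" "?N X F e \<subseteq> U"
        using bspec[OF conjunct2[OF bspec[OF K U(1)]] U(2)] by (elim exE conjE)
      moreover have "U \<subseteq> \<Union>K" using U(1) by (rule Union_upper)
      ultimately show "\<exists>F \<epsilon>. finite F \<and> F \<subseteq> XXs \<and> \<epsilon> > 0 \<and> ?N X F \<epsilon> \<subseteq> \<Union>K"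
        by (intro exI[of _ F] exI[of _ e] conjI) (blast intro: order_trans)+
    qed
    qed
  qed
  then show ?thesis unfolding weak_top_def by (simp only: topology_inverse')
qed


lemma weak_top_topspace: "topspace (weak_top M XX XXs) = XX"
proof -
  have "openin (weak_top M XX XXs) XX"
    unfolding weak_top_open by (intro conjI ballI subset_refl exI[of _ "{}"] exI[of _ "1::real"]) auto
  then have "XX \<subseteq> topspace (weak_top M XX XXs)" by (rule openin_subset)
  moreover have "topspace (weak_top M XX XXs) \<subseteq> XX"
  proof
    fix x assume "x \<in> topspace (weak_top M XX XXs)"
    then obtain U where "openin (weak_top M XX XXs) U" "x \<in> U" unfolding topspace_def by blast
    then show "x \<in> XX" unfolding weak_top_open by blast
  qed
  ultimately show ?thesis by blast
qed

lemma lsc_approx: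
  assumes lsc: "lsc_wrt (weak_top M XX XXs) \<phi>" and w: "w \<in> XX"
    and H: "\<And>F \<epsilon> \<eta>. finite F \<Longrightarrow> F \<subseteq> XXs \<Longrightarrow> \<epsilon> > 0 \<Longrightarrow> (\<eta>::real) > 0 \<Longrightarrow>
       \<exists>X'\<in>XX. (\<forall>Y\<in>F. \<bar>(\<integral>\<omega>. X' \<omega> * Y \<omega> \<partial>M) - (\<integral>\<omega>. w \<omega> * Y \<omega> \<partial>M)\<bar> < \<epsilon>) \<and> \<phi> X' \<le> ereal (b + \<eta>)"
  shows "\<phi> w \<le> ereal b"
proof (rule ccontr)
  assume "\<not> \<phi> w \<le> ereal b"
  then have lt: "ereal b < \<phi> w" by simp
  obtain c where c: "b < c" "ereal c < \<phi> w"
  proof (cases "\<phi> w")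
    case (real r) then show ?thesis using lt that[of "(b + r)/2"] by auto
  next
    case PInf then show ?thesis using that[of "b + 1"] by auto
  next
    case MInf then show ?thesis using lt by auto
  qed
  obtain U where U: "openin (weak_top M XX XXs) U" "w \<in> U" "\<forall>y\<in>U. ereal c < \<phi> y"
    using lsc c(2) w unfolding lsc_wrt_def weak_top_topspace by blast
  then obtain F e where Fe: "finite F" "F \<subseteq> XXs" "e > 0"
    "{X'\<in>XX. \<forall>Y\<in>F. \<bar>(\<integral>\<omega>. X' \<omega> * Y \<omega> \<partial>M) - (\<integral>\<omega>. w \<omega> * Y \<omega> \<partial>M)\<bar> < e} \<subseteq> U"
    unfolding weak_top_open by blast
  obtain X' where X': "X' \<in> XX" "\<forall>Y\<in>F. \<bar>(\<integral>\<omega>. X' \<omega> * Y \<omega> \<partial>M) - (\<integral>\<omega>. w \<omega> * Y \<omega> \<partial>M)\<bar> < e"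
    "\<phi> X' \<le> ereal (b + (c - b))"
    using H[OF Fe(1,2,3), of "c - b"] c by auto
  then have "X' \<in> U" using Fe(4) by blast
  then have "ereal c < \<phi> X'" using U(3) by blast
  then show False using X'(3) by simp
qed


locale cor =
  fixes M :: "'a measure" and XX XXs :: "('a \<Rightarrow> real) set"
    and \<phi> :: "('a \<Rightarrow> real) \<Rightarrow> ereal"
  assumes ps: "prob_space M" and na: "nonatomic M"
    and subX: "linear_subspace_rv XX" and subXs: "linear_subspace_rv XXs"
    and liX: "law_invariant_set M XX" and liXs: "law_invariant_set M XXs"
    and intX: "\<forall>X\<in>XX. integrable M X" and intXs: "\<forall>Y\<in>XXs. integrable M Y"
    and LX: "Linf M \<subseteq> XX" and LXs: "Linf M \<subseteq> XXs"
    and intXY: "\<forall>X\<in>XX. \<forall>Y\<in>XXs. integrable M (\<lambda>\<omega>. X \<omega> * Y \<omega>)"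
    and nminf: "\<forall>X\<in>XX. \<phi> X \<noteq> -\<infinity>"
    and proper: "\<exists>X\<in>XX. \<phi> X < \<infinity>"
    and cvx: "convex_on_rv XX \<phi>"
    and lsc: "lsc_wrt (weak_top M XX XXs) \<phi>"
    and lif: "law_invariant_fun M XX \<phi>"
    and ti1: "translation_invariant_along XX \<phi> (rv_span (\<lambda>_. 1))"
begin

definition ip :: "('a \<Rightarrow> real) \<Rightarrow> ('a \<Rightarrow> real) \<Rightarrow> real" where
  "ip X Y = (\<integral>\<omega>. X \<omega> * Y \<omega> \<partial>M)"

lemma XX0: "(\<lambda>_. 0) \<in> XX" using subX unfolding linear_subspace_rv_def by blast
lemma XXadd: "X \<in> XX \<Longrightarrow> Y \<in> XX \<Longrightarrow> (\<lambda>\<omega>. X \<omega> + Y \<omega>) \<in> XX"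
  using subX unfolding linear_subspace_rv_def by blast
lemma XXsmul: "X \<in> XX \<Longrightarrow> (\<lambda>\<omega>. c * X \<omega>) \<in> XX"
  using subX unfolding linear_subspace_rv_def by blast
lemma XXlin: "X \<in> XX \<Longrightarrow> Y \<in> XX \<Longrightarrow> (\<lambda>\<omega>. a * X \<omega> + b * Y \<omega>) \<in> XX"
  using XXadd[OF XXsmul XXsmul] by blast
lemma XXsadd: "X \<in> XXs \<Longrightarrow> Y \<in> XXs \<Longrightarrow> (\<lambda>\<omega>. X \<omega> + Y \<omega>) \<in> XXs"
  using subXs unfolding linear_subspace_rv_def by blast
lemma XXssmul: "X \<in> XXs \<Longrightarrow> (\<lambda>\<omega>. c * X \<omega>) \<in> XXs"
  using subXs unfolding linear_subspace_rv_def by blast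
lemma XXs0: "(\<lambda>_. 0) \<in> XXs" using subXs unfolding linear_subspace_rv_def by blast

lemma const_Linf: "(\<lambda>_. c) \<in> Linf M"
  unfolding Linf_def by (auto intro!: exI[of _ "\<bar>c\<bar>"])
lemma XXconst: "(\<lambda>_. c) \<in> XX" using const_Linf LX by blast
lemma XXsconst: "(\<lambda>_. c) \<in> XXs" using const_Linf LXs by blast

lemma XXmeas: "X \<in> XX \<Longrightarrow> X \<in> borel_measurable M" using intX by auto
lemma XXint: "X \<in> XX \<Longrightarrow> integrable M X" using intX by auto

lemma ip_lin:
  assumes "X \<in> XX" "Z \<in> XX" "Y \<in> XXs"
  shows "ip (\<lambda>\<omega>. a * X \<omega> + b * Z \<omega>) Y = a * ip X Y + b * ip Z Y"
proof -
  have i: "integrable M (\<lambda>\<omega>. X \<omega> * Y \<omega>)" "integrable M (\<lambda>\<omega>. Z \<omega> * Y \<omega>)" using intXY assms by auto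
  have "(\<lambda>\<omega>. (a * X \<omega> + b * Z \<omega>) * Y \<omega>) = (\<lambda>\<omega>. a * (X \<omega> * Y \<omega>) + b * (Z \<omega> * Y \<omega>))"
    by (auto simp: algebra_simps)
  then show ?thesis unfolding ip_def using i by simp
qed

lemma ereal_addsub: "x \<noteq> -\<infinity> \<Longrightarrow> x + ereal a - ereal b = x + ereal (a - b)"
  by (cases x) auto

lemma phi0: "\<exists>p0. \<phi> (\<lambda>_. 0) = ereal p0"
proof -
  have "(\<lambda>_. 0::real) = (\<lambda>\<omega>. 0 * 1)" by simp
  then have "(\<lambda>_. 0::real) \<in> rv_span (\<lambda>_. 1)" unfolding rv_span_def by blast
  then have "\<phi> (\<lambda>_. 0) < \<infinity>" using ti1 unfolding translation_invariant_along_def affine_along_def by blast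
  moreover have "\<phi> (\<lambda>_. 0) \<noteq> -\<infinity>" using nminf XX0 by blast
  ultimately show ?thesis by (cases "\<phi> (\<lambda>_. 0)") auto
qed

definition p0 where "p0 = (SOME p. \<phi> (\<lambda>_. 0) = ereal p)"
lemma p0: "\<phi> (\<lambda>_. 0) = ereal p0"
  unfolding p0_def using phi0 by (rule someI_ex)

lemma span_fin: "Z \<in> XX \<Longrightarrow> affine_along \<phi> (rv_span Z) \<Longrightarrow> \<exists>k. \<forall>t. \<phi> (\<lambda>\<omega>. t * Z \<omega>) = ereal (p0 + t * k)"
proof -
  assume Z: "Z \<in> XX" and aff: "affine_along \<phi> (rv_span Z)"
  have mem: "(\<lambda>\<omega>. t * Z \<omega>) \<in> rv_span Z" for t unfolding rv_span_def by blast
  have fin: "\<phi> (\<lambda>\<omega>. t * Z \<omega>) < \<infinity>" for t using aff mem unfolding affine_along_def by blast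
  have nm: "\<phi> (\<lambda>\<omega>. t * Z \<omega>) \<noteq> -\<infinity>" for t using nminf XXsmul[OF Z] by blast
  obtain z where z: "\<phi> (\<lambda>\<omega>. 1 * Z \<omega>) = ereal z" using fin[of 1] nm[of 1] by (cases "\<phi> (\<lambda>\<omega>. 1 * Z \<omega>)") auto
  have "\<phi> (\<lambda>\<omega>. t * Z \<omega>) = ereal (p0 + t * (z - p0))" for t
  proof -
    have "\<phi> (\<lambda>\<omega>. t * (1 * Z \<omega>) + 0 * (1 * Z \<omega>)) - \<phi> (\<lambda>_. 0)
       = ereal t * (\<phi> (\<lambda>\<omega>. 1 * Z \<omega>) - \<phi> (\<lambda>_. 0)) + ereal 0 * (\<phi> (\<lambda>\<omega>. 1 * Z \<omega>) - \<phi> (\<lambda>_. 0))"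
    proof -
      have A2: "\<forall>U\<in>rv_span Z. \<forall>V\<in>rv_span Z. \<forall>a b. \<phi> (\<lambda>\<omega>. a * U \<omega> + b * V \<omega>) - \<phi> (\<lambda>_. 0) =
                 ereal a * (\<phi> U - \<phi> (\<lambda>_. 0)) + ereal b * (\<phi> V - \<phi> (\<lambda>_. 0))"
        using aff unfolding affine_along_def by blast
      show ?thesis using A2[rule_format, OF mem[of 1] mem[of 1], of t 0] by simp
    qed
    then have "\<phi> (\<lambda>\<omega>. t * Z \<omega>) - ereal p0 = ereal (t * (z - p0))" using z p0 by (simp add: zero_ereal_def)
    moreover obtain w where "\<phi> (\<lambda>\<omega>. t * Z \<omega>) = ereal w" using fin[of t] nm[of t] by (cases "\<phi> (\<lambda>\<omega>. t * Z \<omega>)") auto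
    ultimately show ?thesis by simp
  qed
  then show ?thesis by blast
qed

definition c1 where "c1 = (SOME k. \<forall>t. \<phi> (\<lambda>_. t) = ereal (p0 + t * k))"

lemma c1: "\<phi> (\<lambda>_. t) = ereal (p0 + t * c1)"
proof -
  have "\<exists>k. \<forall>t. \<phi> (\<lambda>\<omega>. t * (\<lambda>_. 1::real) \<omega>) = ereal (p0 + t * k)"
    using span_fin[OF XXconst] ti1 unfolding translation_invariant_along_def by blast
  then have "\<exists>k. \<forall>t. \<phi> (\<lambda>_. t) = ereal (p0 + t * k)" by simp
  then have "\<forall>t. \<phi> (\<lambda>_. t) = ereal (p0 + t * c1)" unfolding c1_def by (rule someI_ex)
  then show ?thesis by blast
qed

lemma phi_const: "\<phi> (\<lambda>_. t) = ereal (p0 + t * c1)" using c1[of t] by simp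
lemma phi_const': "\<phi> (\<lambda>\<omega>. t * 1) = ereal (p0 + t * c1)" using c1[of t] by simp

lemma phi_transl: "X \<in> XX \<Longrightarrow> \<phi> (\<lambda>\<omega>. X \<omega> + m) = \<phi> X + ereal (m * c1)"
proof -
  assume X: "X \<in> XX"
  have mem: "(\<lambda>\<omega>. m * 1) \<in> rv_span (\<lambda>_. 1::real)" unfolding rv_span_def by blast
  have "\<phi> (\<lambda>\<omega>. X \<omega> + m * 1) = \<phi> X + \<phi> (\<lambda>\<omega>. m * 1) - \<phi> (\<lambda>_. 0)"
  proof -
    have T2: "\<forall>X\<in>XX. \<forall>Z\<in>rv_span (\<lambda>_. 1::real). \<phi> (\<lambda>\<omega>. X \<omega> + Z \<omega>) = \<phi> X + \<phi> Z - \<phi> (\<lambda>_. 0)"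
      using ti1 unfolding translation_invariant_along_def by blast
    show ?thesis using T2[rule_format, OF X mem] by simp
  qed
  then show ?thesis using c1[of m] p0 ereal_addsub[of "\<phi> X" "p0 + m * c1" p0] nminf X by simp
qed

end

context cor begin

definition dir where "dir d \<kappa> \<longleftrightarrow> d \<in> XX \<and> (\<forall>t. \<phi> (\<lambda>\<omega>. t * d \<omega>) = ereal (p0 + t * \<kappa>))"

lemma R1:
  assumes dk: "dir d \<kappa>" and y: "y \<in> XX" and yr: "\<phi> y = ereal r"
  shows "\<phi> (\<lambda>\<omega>. y \<omega> + t * d \<omega>) \<le> ereal (r + t * \<kappa>)"
proof -
  have d: "d \<in> XX" and dphi: "\<And>t. \<phi> (\<lambda>\<omega>. t * d \<omega>) = ereal (p0 + t * \<kappa>)"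
    using dk unfolding dir_def by auto
  define w where "w = (\<lambda>\<omega>. y \<omega> + t * d \<omega>)"
  have w: "w \<in> XX" unfolding w_def by (intro XXadd y XXsmul d)
  have "\<phi> w \<le> ereal (r + t * \<kappa>)"
  proof (rule lsc_approx[OF lsc w])
    fix F \<epsilon> \<eta> :: real
    fix F assume F: "finite F" "F \<subseteq> XXs" and e: "\<epsilon> > 0" and h: "\<eta> > 0"
    define S where "S = (\<Sum>Y\<in>F. \<bar>ip y Y\<bar>)"
    have S0: "0 \<le> S" unfolding S_def by (intro sum_nonneg) auto
    have Sle: "\<bar>ip y Y\<bar> \<le> S" if "Y \<in> F" for Y
      unfolding S_def using F(1) that by (intro member_le_sum) auto
    define s where "s = min (1/2) (min (\<epsilon> / (S + 1)) (\<eta> / (\<bar>p0 - r\<bar> + 1)))"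
    have s0: "0 < s" "s < 1" unfolding s_def using e h S0 by auto
    have s1: "s * (S + 1) \<le> \<epsilon>"
    proof -
      have "s \<le> \<epsilon> / (S + 1)" unfolding s_def by simp
      then show ?thesis using S0 by (simp add: le_divide_eq)
    qed
    have s2: "s * (\<bar>p0 - r\<bar> + 1) \<le> \<eta>"
    proof -
      have "s \<le> \<eta> / (\<bar>p0 - r\<bar> + 1)" unfolding s_def by simp
      then show ?thesis by (simp add: le_divide_eq)
    qed
    have sS: "s * S < \<epsilon>" using s1 s0 by (simp add: algebra_simps)
    have sp: "s * \<bar>p0 - r\<bar> < \<eta>" using s2 s0 by (simp add: algebra_simps)
    define X' where "X' = (\<lambda>\<omega>. s * ((t / s) * d \<omega>) + (1 - s) * y \<omega>)"
    have X': "X' \<in> XX" unfolding X'_def by (intro XXlin XXsmul d y)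
    have td: "(\<lambda>\<omega>. (t / s) * d \<omega>) \<in> XX" by (intro XXsmul d)
    have cv: "\<phi> X' \<le> ereal s * \<phi> (\<lambda>\<omega>. (t / s) * d \<omega>) + ereal (1 - s) * \<phi> y"
    proof -
      have C: "\<forall>X\<in>XX. \<forall>Y\<in>XX. \<forall>t::real. 0 < t \<and> t < 1 \<longrightarrow>
          \<phi> (\<lambda>\<omega>. t * X \<omega> + (1 - t) * Y \<omega>) \<le> ereal t * \<phi> X + ereal (1 - t) * \<phi> Y"
        using cvx unfolding convex_on_rv_def by blast
      show ?thesis using C[rule_format, OF td y, of s] s0 unfolding X'_def by simp
    qed
    also have "\<dots> = ereal (s * p0 + t * \<kappa> + (1 - s) * r)"
      using dphi[of "t / s"] yr s0 by (simp add: field_simps)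
    also have "\<dots> \<le> ereal (r + t * \<kappa> + \<eta>)"
    proof -
      have "s * p0 + t * \<kappa> + (1 - s) * r = r + t * \<kappa> + s * (p0 - r)" by (simp add: algebra_simps)
      moreover have "s * (p0 - r) \<le> s * \<bar>p0 - r\<bar>" using s0 by (intro mult_left_mono) auto
      ultimately show ?thesis using sp by simp
    qed
    finally have phiX': "\<phi> X' \<le> ereal (r + t * \<kappa> + \<eta>)" .
    have X'eq: "X' = (\<lambda>\<omega>. 1 * w \<omega> + (- s) * y \<omega>)"
      unfolding X'_def w_def using s0 by (auto simp: field_simps)
    have close: "\<bar>(\<integral>\<omega>. X' \<omega> * Y \<omega> \<partial>M) - (\<integral>\<omega>. w \<omega> * Y \<omega> \<partial>M)\<bar> < \<epsilon>" if Y: "Y \<in> F" for Y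
    proof -
      have YX: "Y \<in> XXs" using Y F by auto
      have "ip X' Y = ip w Y - s * ip y Y" unfolding X'eq using ip_lin[OF w y YX, of 1 "- s"] by simp
      then have "\<bar>ip X' Y - ip w Y\<bar> = s * \<bar>ip y Y\<bar>" using s0 by (simp add: abs_mult)
      also have "\<dots> \<le> s * S" using Sle[OF Y] s0 by (intro mult_left_mono) auto
      also have "\<dots> < \<epsilon>" by (rule sS)
      finally show ?thesis unfolding ip_def .
    qed
    show "\<exists>X'\<in>XX. (\<forall>Y\<in>F. \<bar>(\<integral>\<omega>. X' \<omega> * Y \<omega> \<partial>M) - (\<integral>\<omega>. w \<omega> * Y \<omega> \<partial>M)\<bar> < \<epsilon>) \<and>
        \<phi> X' \<le> ereal (r + t * \<kappa> + \<eta>)"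
      using X' close phiX' by blast
  qed
  then show ?thesis unfolding w_def .
qed

lemma R2:
  assumes dk: "dir d \<kappa>" and y: "y \<in> XX"
  shows "\<phi> (\<lambda>\<omega>. y \<omega> + t * d \<omega>) = \<phi> y + ereal (t * \<kappa>)"
proof -
  have d: "d \<in> XX" using dk unfolding dir_def by auto
  define yy where "yy = (\<lambda>\<omega>. y \<omega> + t * d \<omega>)"
  have yy: "yy \<in> XX" unfolding yy_def by (intro XXadd y XXsmul d)
  have bk: "(\<lambda>\<omega>. yy \<omega> + (- t) * d \<omega>) = y" unfolding yy_def by auto
  show ?thesis
  proof (cases "\<phi> y")
    case (real r)
    have le: "\<phi> yy \<le> ereal (r + t * \<kappa>)" using R1[OF dk y real] unfolding yy_def .
    moreover have "\<phi> yy \<noteq> -\<infinity>" using nminf yy by blast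
    ultimately obtain rr where rr: "\<phi> yy = ereal rr" by (cases "\<phi> yy") auto
    have "\<phi> y \<le> ereal (rr + (- t) * \<kappa>)" using R1[OF dk yy rr, of "- t"] bk by simp
    then have "r + t * \<kappa> \<le> rr" using real by simp
    then have "\<phi> yy = ereal (r + t * \<kappa>)" using le rr by simp
    then show ?thesis using real unfolding yy_def by simp
  next
    case PInf
    have "\<phi> yy = \<infinity>"
    proof (rule ccontr)
      assume "\<phi> yy \<noteq> \<infinity>"
      moreover have "\<phi> yy \<noteq> -\<infinity>" using nminf yy by blast
      ultimately obtain rr where rr: "\<phi> yy = ereal rr" by (cases "\<phi> yy") auto
      have "\<phi> y \<le> ereal (rr + (- t) * \<kappa>)" using R1[OF dk yy rr, of "- t"] bk by simp
      then show False using PInf by simp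
    qed
    then show ?thesis using PInf unfolding yy_def by simp
  next
    case MInf then show ?thesis using nminf y by blast
  qed
qed

lemma dir_law:
  assumes dk: "dir d \<kappa>" and d': "d' \<in> XX" and law: "distr M borel d' = distr M borel d"
  shows "dir d' \<kappa>"
  unfolding dir_def
proof (intro conjI allI d')
  fix t
  have d: "d \<in> XX" using dk unfolding dir_def by auto
  have dm: "d \<in> borel_measurable M" "d' \<in> borel_measurable M" using XXmeas d d' by auto
  have "distr M borel (\<lambda>\<omega>. t * d' \<omega>) = distr (distr M borel d') borel (\<lambda>x. t * x)"
    using distr_distr[of "\<lambda>x. t * x" borel borel d' M] dm by (simp add: comp_def)
  also have "\<dots> = distr (distr M borel d) borel (\<lambda>x. t * x)" using law by simp
  also have "\<dots> = distr M borel (\<lambda>\<omega>. t * d \<omega>)"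
    using distr_distr[of "\<lambda>x. t * x" borel borel d M] dm by (simp add: comp_def)
  finally have L: "distr M borel (\<lambda>\<omega>. t * d' \<omega>) = distr M borel (\<lambda>\<omega>. t * d \<omega>)" .
  have "\<phi> (\<lambda>\<omega>. t * d' \<omega>) = \<phi> (\<lambda>\<omega>. t * d \<omega>)"
    using lif XXsmul[OF d'] XXsmul[OF d] L unfolding law_invariant_fun_def by blast
  then show "\<phi> (\<lambda>\<omega>. t * d' \<omega>) = ereal (p0 + t * \<kappa>)" using dk unfolding dir_def by simp
qed

lemma dir_lin:
  assumes d1: "dir d1 k1" and d2: "dir d2 k2"
  shows "dir (\<lambda>\<omega>. a * d1 \<omega> + b * d2 \<omega>) (a * k1 + b * k2)"
  unfolding dir_def
proof (intro conjI allI)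
  have x1: "d1 \<in> XX" and x2: "d2 \<in> XX" using d1 d2 unfolding dir_def by auto
  show "(\<lambda>\<omega>. a * d1 \<omega> + b * d2 \<omega>) \<in> XX" by (intro XXlin x1 x2)
  fix t
  have e: "(\<lambda>\<omega>. t * (a * d1 \<omega> + b * d2 \<omega>)) = (\<lambda>\<omega>. (\<lambda>\<omega>. (t * a) * d1 \<omega>) \<omega> + (t * b) * d2 \<omega>)"
    by (auto simp: algebra_simps)
  have "\<phi> (\<lambda>\<omega>. t * (a * d1 \<omega> + b * d2 \<omega>)) = \<phi> (\<lambda>\<omega>. (t * a) * d1 \<omega>) + ereal (t * b * k2)"
    unfolding e by (rule R2[OF d2 XXsmul[OF x1]])
  also have "\<dots> = ereal (p0 + t * (a * k1 + b * k2))"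
  proof -
    have "\<phi> (\<lambda>\<omega>. (t * a) * d1 \<omega>) = ereal (p0 + (t * a) * k1)" using d1 unfolding dir_def by blast
    then show ?thesis by (simp add: algebra_simps)
  qed
  finally show "\<phi> (\<lambda>\<omega>. t * (a * d1 \<omega> + b * d2 \<omega>)) = ereal (p0 + t * (a * k1 + b * k2))" .
qed

lemma dir_one: "dir (\<lambda>_. 1) c1"
  unfolding dir_def using XXconst phi_const' by auto

definition AA where "AA = {v. dir v (c1 * (\<integral>\<omega>. v \<omega> \<partial>M))}"

lemma AA_sub: "v \<in> AA \<Longrightarrow> v \<in> XX" unfolding AA_def dir_def by auto

lemma AA_lin:
  assumes "v1 \<in> AA" "v2 \<in> AA"
  shows "(\<lambda>\<omega>. a * v1 \<omega> + b * v2 \<omega>) \<in> AA"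
proof -
  have i: "integrable M v1" "integrable M v2" using assms AA_sub XXint by auto
  have "dir (\<lambda>\<omega>. a * v1 \<omega> + b * v2 \<omega>) (a * (c1 * (\<integral>\<omega>. v1 \<omega> \<partial>M)) + b * (c1 * (\<integral>\<omega>. v2 \<omega> \<partial>M)))"
    using assms unfolding AA_def by (intro dir_lin) auto
  moreover have "a * (c1 * (\<integral>\<omega>. v1 \<omega> \<partial>M)) + b * (c1 * (\<integral>\<omega>. v2 \<omega> \<partial>M)) =
      c1 * (\<integral>\<omega>. a * v1 \<omega> + b * v2 \<omega> \<partial>M)"
    using i by (simp add: algebra_simps)
  ultimately show ?thesis unfolding AA_def by simp
qed

lemma AA_one: "(\<lambda>_. 1) \<in> AA"
proof -
  interpret prob_space M by (rule ps)
  show ?thesis unfolding AA_def using dir_one prob_space by simp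
qed

lemma AA_phi: "v \<in> AA \<Longrightarrow> \<phi> v = ereal (p0 + c1 * (\<integral>\<omega>. v \<omega> \<partial>M))"
  unfolding AA_def dir_def by (auto dest: spec[of _ 1])

end

context cor begin

lemma ip_lin2:
  assumes "X \<in> XX" "Y1 \<in> XXs" "Y2 \<in> XXs"
  shows "ip X (\<lambda>\<omega>. a * Y1 \<omega> + b * Y2 \<omega>) = a * ip X Y1 + b * ip X Y2"
proof -
  have i: "integrable M (\<lambda>\<omega>. X \<omega> * Y1 \<omega>)" "integrable M (\<lambda>\<omega>. X \<omega> * Y2 \<omega>)" using intXY assms by auto
  have "(\<lambda>\<omega>. X \<omega> * (a * Y1 \<omega> + b * Y2 \<omega>)) = (\<lambda>\<omega>. a * (X \<omega> * Y1 \<omega>) + b * (X \<omega> * Y2 \<omega>))"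
    by (auto simp: algebra_simps)
  then show ?thesis unfolding ip_def using i by simp
qed

lemma sum_XXs:
  assumes "finite F" "F \<subseteq> XXs"
  shows "(\<lambda>\<omega>. \<Sum>Y\<in>F. cc Y * Y \<omega>) \<in> XXs \<and> (\<forall>X\<in>XX. ip X (\<lambda>\<omega>. \<Sum>Y\<in>F. cc Y * Y \<omega>) = (\<Sum>Y\<in>F. cc Y * ip X Y))"
  using assms
proof (induction F rule: finite_induct)
  case empty
  have "ip X (\<lambda>\<omega>. 0) = 0" for X unfolding ip_def by simp
  then show ?case using XXs0 by simp
next
  case (insert Y1 F)
  then have IH: "(\<lambda>\<omega>. \<Sum>Y\<in>F. cc Y * Y \<omega>) \<in> XXs"
      "\<forall>X\<in>XX. ip X (\<lambda>\<omega>. \<Sum>Y\<in>F. cc Y * Y \<omega>) = (\<Sum>Y\<in>F. cc Y * ip X Y)" and Y1: "Y1 \<in> XXs" by auto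
  have e: "(\<lambda>\<omega>. \<Sum>Y\<in>insert Y1 F. cc Y * Y \<omega>) = (\<lambda>\<omega>. cc Y1 * Y1 \<omega> + 1 * (\<lambda>\<omega>. \<Sum>Y\<in>F. cc Y * Y \<omega>) \<omega>)"
    using insert(1,2) by simp
  show ?case unfolding e
  proof (intro conjI ballI)
    show "(\<lambda>\<omega>. cc Y1 * Y1 \<omega> + 1 * (\<lambda>\<omega>. \<Sum>Y\<in>F. cc Y * Y \<omega>) \<omega>) \<in> XXs"
      using XXsadd[OF XXssmul[OF Y1] XXssmul[OF IH(1)], of "cc Y1" 1] by simp
    fix X assume X: "X \<in> XX"
    show "ip X (\<lambda>\<omega>. cc Y1 * Y1 \<omega> + 1 * (\<lambda>\<omega>. \<Sum>Y\<in>F. cc Y * Y \<omega>) \<omega>) = (\<Sum>Y\<in>insert Y1 F. cc Y * ip X Y)"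
      using ip_lin2[OF X Y1 IH(1), of "cc Y1" 1] IH(2) X insert(1,2) by simp
  qed
qed

lemma Klemma:
  assumes "finite F"
  shows "F \<subseteq> XXs \<Longrightarrow> Y0 \<in> XXs \<Longrightarrow> (\<forall>v\<in>AA. (\<forall>Y\<in>F. ip v Y = 0) \<longrightarrow> ip v Y0 = 0) \<Longrightarrow>
     \<exists>cc. \<forall>v\<in>AA. ip v Y0 = (\<Sum>Y\<in>F. cc Y * ip v Y)"
  using assms
proof (induction F arbitrary: Y0 rule: finite_induct)
  case empty then show ?case by auto
next
  case (insert Y1 F)
  have F: "F \<subseteq> XXs" and Y1: "Y1 \<in> XXs" using insert by auto
  have Y0: "Y0 \<in> XXs" by fact
  have sumi: "(\<Sum>Y\<in>insert Y1 F. cc Y * ip v Y) = cc Y1 * ip v Y1 + (\<Sum>Y\<in>F. cc Y * ip v Y)" for cc v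
    using insert(1,2) by simp
  show ?case
  proof (cases "\<exists>v1\<in>AA. (\<forall>Y\<in>F. ip v1 Y = 0) \<and> ip v1 Y1 \<noteq> 0")
    case True
    then obtain v1 where v1: "v1 \<in> AA" "\<forall>Y\<in>F. ip v1 Y = 0" "ip v1 Y1 \<noteq> 0" by blast
    have v1X: "v1 \<in> XX" using v1(1) AA_sub by blast
    define \<alpha> where "\<alpha> = ip v1 Y0 / ip v1 Y1"
    define Y0' where "Y0' = (\<lambda>\<omega>. 1 * Y0 \<omega> + (- \<alpha>) * Y1 \<omega>)"
    have Y0'X: "Y0' \<in> XXs" unfolding Y0'_def by (intro XXsadd XXssmul Y0 Y1)
    have hyp: "\<forall>v\<in>AA. (\<forall>Y\<in>F. ip v Y = 0) \<longrightarrow> ip v Y0' = 0"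
    proof (intro ballI impI)
      fix v assume v: "v \<in> AA" and kF: "\<forall>Y\<in>F. ip v Y = 0"
      have vX: "v \<in> XX" using v AA_sub by blast
      define \<beta> where "\<beta> = ip v Y1 / ip v1 Y1"
      define v' where "v' = (\<lambda>\<omega>. 1 * v \<omega> + (- \<beta>) * v1 \<omega>)"
      have v'A: "v' \<in> AA" unfolding v'_def by (intro AA_lin v v1(1))
      have k1: "ip v' Y = 0" if "Y \<in> insert Y1 F" for Y
      proof -
        have YX: "Y \<in> XXs" using that F Y1 by auto
        have "ip v' Y = ip v Y - \<beta> * ip v1 Y" unfolding v'_def using ip_lin[OF vX v1X YX, of 1 "- \<beta>"] by simp
        then show ?thesis using that kF v1(2,3) unfolding \<beta>_def by auto
      qed
      have "ip v' Y0 = 0" using insert.prems(3) v'A k1 by blast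
      then have "ip v Y0 = \<beta> * ip v1 Y0" unfolding v'_def using ip_lin[OF vX v1X Y0, of 1 "- \<beta>"] by simp
      moreover have "ip v Y0' = ip v Y0 - \<alpha> * ip v Y1"
        unfolding Y0'_def using ip_lin2[OF vX Y0 Y1, of 1 "- \<alpha>"] by simp
      ultimately show "ip v Y0' = 0" unfolding \<alpha>_def \<beta>_def using v1(3) by (simp add: field_simps)
    qed
    obtain cc where cc: "\<forall>v\<in>AA. ip v Y0' = (\<Sum>Y\<in>F. cc Y * ip v Y)"
      using insert.IH[OF F Y0'X hyp] by blast
    define cc' where "cc' = cc(Y1 := \<alpha>)"
    have "ip v Y0 = (\<Sum>Y\<in>insert Y1 F. cc' Y * ip v Y)" if v: "v \<in> AA" for v
    proof -
      have vX: "v \<in> XX" using v AA_sub by blast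
      have "ip v Y0' = ip v Y0 - \<alpha> * ip v Y1"
        unfolding Y0'_def using ip_lin2[OF vX Y0 Y1, of 1 "- \<alpha>"] by simp
      moreover have "(\<Sum>Y\<in>F. cc' Y * ip v Y) = (\<Sum>Y\<in>F. cc Y * ip v Y)"
        using insert(2) unfolding cc'_def by (intro sum.cong) auto
      ultimately show ?thesis using cc v sumi[of cc' v] unfolding cc'_def by simp
    qed
    then show ?thesis by blast
  next
    case False
    have hyp: "\<forall>v\<in>AA. (\<forall>Y\<in>F. ip v Y = 0) \<longrightarrow> ip v Y0 = 0"
      using False insert.prems(3) by auto
    obtain cc where cc: "\<forall>v\<in>AA. ip v Y0 = (\<Sum>Y\<in>F. cc Y * ip v Y)"
      using insert.IH[OF F Y0 hyp] by blast
    define cc' where "cc' = cc(Y1 := 0)"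
    have "ip v Y0 = (\<Sum>Y\<in>insert Y1 F. cc' Y * ip v Y)" if v: "v \<in> AA" for v
    proof -
      have "(\<Sum>Y\<in>F. cc' Y * ip v Y) = (\<Sum>Y\<in>F. cc Y * ip v Y)"
        using insert(2) unfolding cc'_def by (intro sum.cong) auto
      then show ?thesis using cc v sumi[of cc' v] unfolding cc'_def by simp
    qed
    then show ?thesis by blast
  qed
qed

end

context cor begin

lemma density:
  assumes fin: "finite F" and FX: "F \<subseteq> XXs" and X: "X \<in> XX"
    and D: "\<forall>Y\<in>XXs. (\<forall>v\<in>AA. ip v Y = 0) \<longrightarrow> (\<forall>X\<in>XX. ip X Y = 0)"
  shows "\<exists>v\<in>AA. \<forall>Y\<in>F. ip v Y = ip X Y"
  using fin FX
proof (induction F rule: finite_induct)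
  case empty then show ?case using AA_one by blast
next
  case (insert Y0 F)
  have F: "F \<subseteq> XXs" and Y0: "Y0 \<in> XXs" using insert by auto
  obtain d1 where d1: "d1 \<in> AA" "\<forall>Y\<in>F. ip d1 Y = ip X Y" using insert.IH[OF F] by blast
  have d1X: "d1 \<in> XX" using d1(1) AA_sub by blast
  define W where "W = (\<lambda>\<omega>. 1 * X \<omega> + (- 1) * d1 \<omega>)"
  have WX: "W \<in> XX" unfolding W_def by (intro XXlin X d1X)
  have ipW: "ip W Y = ip X Y - ip d1 Y" if "Y \<in> XXs" for Y
    unfolding W_def using ip_lin[OF X d1X that, of 1 "- 1"] by simp
  have WF: "\<forall>Y\<in>F. ip W Y = 0" using ipW d1(2) F by auto
  show ?case
  proof (cases "\<exists>e\<in>AA. (\<forall>Y\<in>F. ip e Y = 0) \<and> ip e Y0 \<noteq> 0")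
    case True
    then obtain e where e: "e \<in> AA" "\<forall>Y\<in>F. ip e Y = 0" "ip e Y0 \<noteq> 0" by blast
    have eX: "e \<in> XX" using e(1) AA_sub by blast
    define \<gamma> where "\<gamma> = ip W Y0 / ip e Y0"
    define v where "v = (\<lambda>\<omega>. 1 * d1 \<omega> + \<gamma> * e \<omega>)"
    have vA: "v \<in> AA" unfolding v_def by (intro AA_lin d1(1) e(1))
    have ipv: "ip v Y = ip d1 Y + \<gamma> * ip e Y" if "Y \<in> XXs" for Y
      unfolding v_def using ip_lin[OF d1X eX that, of 1 \<gamma>] by simp
    have "\<forall>Y\<in>insert Y0 F. ip v Y = ip X Y"
    proof
      fix Y assume Y: "Y \<in> insert Y0 F"
      show "ip v Y = ip X Y"
      proof (cases "Y = Y0")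
        case True
        then show ?thesis using ipv[OF Y0] ipW[OF Y0] e(3) unfolding \<gamma>_def by simp
      next
        case False
        then have "Y \<in> F" using Y by simp
        then show ?thesis using ipv e(2) d1(2) F by auto
      qed
    qed
    then show ?thesis using vA by blast
  next
    case False
    then have hyp: "\<forall>v\<in>AA. (\<forall>Y\<in>F. ip v Y = 0) \<longrightarrow> ip v Y0 = 0" by auto
    obtain cc where cc: "\<forall>v\<in>AA. ip v Y0 = (\<Sum>Y\<in>F. cc Y * ip v Y)"
      using Klemma[OF insert(1) F Y0 hyp] by blast
    define S where "S = (\<lambda>\<omega>. \<Sum>Y\<in>F. cc Y * Y \<omega>)"
    have S: "S \<in> XXs" "\<forall>X\<in>XX. ip X S = (\<Sum>Y\<in>F. cc Y * ip X Y)"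
      using sum_XXs[OF insert(1) F, of cc] unfolding S_def by auto
    define Ys where "Ys = (\<lambda>\<omega>. 1 * Y0 \<omega> + (- 1) * S \<omega>)"
    have Ys: "Ys \<in> XXs" unfolding Ys_def by (intro XXsadd XXssmul Y0 S(1))
    have ipYs: "ip Z Ys = ip Z Y0 - (\<Sum>Y\<in>F. cc Y * ip Z Y)" if "Z \<in> XX" for Z
      unfolding Ys_def using ip_lin2[OF that Y0 S(1), of 1 "- 1"] S(2) that by simp
    have "\<forall>v\<in>AA. ip v Ys = 0" using ipYs cc AA_sub by auto
    then have "ip W Ys = 0" using D Ys WX by blast
    moreover have "(\<Sum>Y\<in>F. cc Y * ip W Y) = 0" using WF by simp
    ultimately have "ip W Y0 = 0" using ipYs[OF WX] by simp
    then have "ip d1 Y0 = ip X Y0" using ipW[OF Y0] by simp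
    then show ?thesis using d1 by auto
  qed
qed

lemma upper:
  assumes D: "\<forall>Y\<in>XXs. (\<forall>v\<in>AA. ip v Y = 0) \<longrightarrow> (\<forall>X\<in>XX. ip X Y = 0)" and X: "X \<in> XX"
  shows "\<phi> X \<le> ereal (p0 + c1 * (\<integral>\<omega>. X \<omega> \<partial>M))"
proof (rule lsc_approx[OF lsc X])
  fix F \<epsilon> \<eta> :: real
  fix F assume F: "finite F" "F \<subseteq> XXs" and e: "\<epsilon> > 0" and h: "\<eta> > 0"
  have fin': "finite (insert (\<lambda>_. 1) F)" using F(1) by simp
  have sub': "insert (\<lambda>_. 1) F \<subseteq> XXs" using F(2) XXsconst by simp
  obtain v where v: "v \<in> AA" "\<forall>Y\<in>insert (\<lambda>_. 1) F. ip v Y = ip X Y"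
    using density[OF fin' sub' X D] by blast
  have "ip v (\<lambda>_. 1) = ip X (\<lambda>_. 1)" using v(2) by blast
  then have Ev: "(\<integral>\<omega>. v \<omega> \<partial>M) = (\<integral>\<omega>. X \<omega> \<partial>M)" unfolding ip_def by simp
  have "\<phi> v \<le> ereal (p0 + c1 * (\<integral>\<omega>. X \<omega> \<partial>M) + \<eta>)" using AA_phi[OF v(1)] Ev h by simp
  moreover have "\<forall>Y\<in>F. \<bar>(\<integral>\<omega>. v \<omega> * Y \<omega> \<partial>M) - (\<integral>\<omega>. X \<omega> * Y \<omega> \<partial>M)\<bar> < \<epsilon>"
  proof
    fix Y assume "Y \<in> F"
    then have "ip v Y = ip X Y" using v(2) by simp
    then show "\<bar>(\<integral>\<omega>. v \<omega> * Y \<omega> \<partial>M) - (\<integral>\<omega>. X \<omega> * Y \<omega> \<partial>M)\<bar> < \<epsilon>" using e unfolding ip_def by simp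
  qed
  ultimately show "\<exists>X'\<in>XX. (\<forall>Y\<in>F. \<bar>(\<integral>\<omega>. X' \<omega> * Y \<omega> \<partial>M) - (\<integral>\<omega>. X \<omega> * Y \<omega> \<partial>M)\<bar> < \<epsilon>) \<and>
      \<phi> X' \<le> ereal (p0 + c1 * (\<integral>\<omega>. X \<omega> \<partial>M) + \<eta>)"
    using AA_sub[OF v(1)] by blast
qed

lemma lower:
  assumes up: "\<And>X. X \<in> XX \<Longrightarrow> \<phi> X \<le> ereal (p0 + c1 * (\<integral>\<omega>. X \<omega> \<partial>M))" and X: "X \<in> XX"
  shows "\<phi> X = ereal (c1 * (\<integral>\<omega>. X \<omega> \<partial>M)) + \<phi> (\<lambda>_. 0)"
proof -
  have mX: "(\<lambda>\<omega>. (- 1) * X \<omega>) \<in> XX" by (intro XXsmul X)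
  have iX: "integrable M X" using XXint X by blast
  have C: "\<forall>X\<in>XX. \<forall>Y\<in>XX. \<forall>t::real. 0 < t \<and> t < 1 \<longrightarrow>
      \<phi> (\<lambda>\<omega>. t * X \<omega> + (1 - t) * Y \<omega>) \<le> ereal t * \<phi> X + ereal (1 - t) * \<phi> Y"
    using cvx unfolding convex_on_rv_def by blast
  have "\<phi> (\<lambda>\<omega>. (1/2) * X \<omega> + (1 - 1/2) * ((- 1) * X \<omega>)) \<le> ereal (1/2) * \<phi> X + ereal (1 - 1/2) * \<phi> (\<lambda>\<omega>. (- 1) * X \<omega>)"
    using C[rule_format, OF X mX, of "1/2"] by simp
  moreover have "(\<lambda>\<omega>. (1/2) * X \<omega> + (1 - 1/2) * ((- 1) * X \<omega>)) = (\<lambda>_. 0::real)" by auto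
  ultimately have cv: "ereal p0 \<le> ereal (1/2) * \<phi> X + ereal (1/2) * \<phi> (\<lambda>\<omega>. (- 1) * X \<omega>)"
    using p0 by simp
  have um: "\<phi> (\<lambda>\<omega>. (- 1) * X \<omega>) \<le> ereal (p0 - c1 * (\<integral>\<omega>. X \<omega> \<partial>M))"
    using up[OF mX] iX by simp
  have uX: "\<phi> X \<le> ereal (p0 + c1 * (\<integral>\<omega>. X \<omega> \<partial>M))" using up[OF X] .
  obtain r where r: "\<phi> X = ereal r" using uX nminf X by (cases "\<phi> X") auto
  obtain q where q: "\<phi> (\<lambda>\<omega>. (- 1) * X \<omega>) = ereal q" using um nminf mX by (cases "\<phi> (\<lambda>\<omega>. (- 1) * X \<omega>)") auto
  have "p0 \<le> r / 2 + q / 2" using cv r q by simp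
  then have "r = p0 + c1 * (\<integral>\<omega>. X \<omega> \<partial>M)" using uX um r q by simp
  then show ?thesis using r p0 by simp
qed

lemma annih:
  assumes Z: "Z \<in> XX" and nc: "nonconstant_rv M Z" and dZ: "dir Z k"
  shows "\<forall>Y\<in>XXs. (\<forall>v\<in>AA. ip v Y = 0) \<longrightarrow> (\<forall>X\<in>XX. ip X Y = 0)"
proof (intro ballI impI)
  interpret prob_space M by (rule ps)
  fix Y X assume Y: "Y \<in> XXs" and ann: "\<forall>v\<in>AA. ip v Y = 0" and X: "X \<in> XX"
  have iY: "integrable M Y" using intXs Y by blast
  have "ip (\<lambda>_. 1) Y = 0" using ann AA_one by blast
  then have Y0: "(\<integral>\<omega>. Y \<omega> \<partial>M) = 0" unfolding ip_def by simp
  show "ip X Y = 0"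
  proof (cases "AE \<omega> in M. Y \<omega> = 0")
    case True
    then have "AE \<omega> in M. X \<omega> * Y \<omega> = 0" by auto
    then show ?thesis unfolding ip_def by (rule integral_eq_zero_AE)
  next
    case False
    have Zm: "Z \<in> borel_measurable M" using XXmeas Z by blast
    have nc': "\<not> (\<exists>c. AE \<omega> in M. Z \<omega> = c)" using nc unfolding nonconstant_rv_def .
    obtain Z1 Z2 where Zs: "Z1 \<in> borel_measurable M" "Z2 \<in> borel_measurable M"
      "distr M borel Z1 = distr M borel Z" "distr M borel Z2 = distr M borel Z"
      "integrable M (\<lambda>\<omega>. Z1 \<omega> * Y \<omega>) \<longrightarrow> integrable M (\<lambda>\<omega>. Z2 \<omega> * Y \<omega>) \<longrightarrow>
        (\<integral>\<omega>. Z1 \<omega> * Y \<omega> \<partial>M) \<noteq> (\<integral>\<omega>. Z2 \<omega> * Y \<omega> \<partial>M)"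
      using rearr_separates[OF na Zm nc' iY Y0 False] by blast
    have Z1X: "Z1 \<in> XX" using liX Zs(1,3) Z unfolding law_invariant_set_def by blast
    have Z2X: "Z2 \<in> XX" using liX Zs(2,4) Z unfolding law_invariant_set_def by blast
    have d1: "dir Z1 k" by (rule dir_law[OF dZ Z1X Zs(3)])
    have d2: "dir Z2 k" by (rule dir_law[OF dZ Z2X Zs(4)])
    have dd: "dir (\<lambda>\<omega>. 1 * Z1 \<omega> + (- 1) * Z2 \<omega>) (1 * k + (- 1) * k)" by (rule dir_lin[OF d1 d2])
    have EZ: "(\<integral>\<omega>. Z1 \<omega> \<partial>M) = (\<integral>\<omega>. Z2 \<omega> \<partial>M)"
    proof -
      have "(\<integral>\<omega>. Z1 \<omega> \<partial>M) = (\<integral>x. x \<partial>distr M borel Z1)" using Zs(1) by (simp add: integral_distr)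
      also have "\<dots> = (\<integral>x. x \<partial>distr M borel Z2)" using Zs(3,4) by simp
      also have "\<dots> = (\<integral>\<omega>. Z2 \<omega> \<partial>M)" using Zs(2) by (simp add: integral_distr)
      finally show ?thesis .
    qed
    have i12: "integrable M Z1" "integrable M Z2" using XXint Z1X Z2X by auto
    have "(\<integral>\<omega>. 1 * Z1 \<omega> + (- 1) * Z2 \<omega> \<partial>M) = 0" using EZ i12 by simp
    then have "(\<lambda>\<omega>. 1 * Z1 \<omega> + (- 1) * Z2 \<omega>) \<in> AA" using dd unfolding AA_def by simp
    then have "ip (\<lambda>\<omega>. 1 * Z1 \<omega> + (- 1) * Z2 \<omega>) Y = 0" using ann by blast
    then have "ip Z1 Y = ip Z2 Y" using ip_lin[OF Z1X Z2X Y, of 1 "- 1"] by simp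
    moreover have "integrable M (\<lambda>\<omega>. Z1 \<omega> * Y \<omega>)" "integrable M (\<lambda>\<omega>. Z2 \<omega> * Y \<omega>)"
      using intXY Z1X Z2X Y by auto
    ultimately show ?thesis using Zs(5) unfolding ip_def by simp
  qed
qed

end

context cor begin

lemma a_imp_c:
  assumes "\<exists>Z\<in>XX. nonconstant_rv M Z \<and> affine_along \<phi> (rv_span Z)"
  shows "\<exists>a::real. \<forall>X\<in>XX. \<phi> X = ereal (a * (\<integral>\<omega>. X \<omega> \<partial>M)) + \<phi> (\<lambda>_. 0)"
proof -
  obtain Z where Z: "Z \<in> XX" "nonconstant_rv M Z" "affine_along \<phi> (rv_span Z)" using assms by blast
  obtain k where k: "\<forall>t. \<phi> (\<lambda>\<omega>. t * Z \<omega>) = ereal (p0 + t * k)" using span_fin[OF Z(1,3)] by blast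
  have dZ: "dir Z k" unfolding dir_def using Z(1) k by blast
  have D: "\<forall>Y\<in>XXs. (\<forall>v\<in>AA. ip v Y = 0) \<longrightarrow> (\<forall>X\<in>XX. ip X Y = 0)" by (rule annih[OF Z(1,2) dZ])
  have up: "\<And>X. X \<in> XX \<Longrightarrow> \<phi> X \<le> ereal (p0 + c1 * (\<integral>\<omega>. X \<omega> \<partial>M))" using upper[OF D] by blast
  show ?thesis using lower[OF up] by blast
qed

lemma c_imp_TI:
  assumes H: "\<forall>X\<in>XX. \<phi> X = ereal (a * (\<integral>\<omega>. X \<omega> \<partial>M)) + \<phi> (\<lambda>_. 0)" and W: "W \<in> XX"
  shows "translation_invariant_along XX \<phi> (rv_span W)"
proof -
  have spanX: "U \<in> XX" if "U \<in> rv_span W" for U using that XXsmul[OF W] unfolding rv_span_def by blast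
  have H': "\<phi> X = ereal (a * (\<integral>\<omega>. X \<omega> \<partial>M) + p0)" if "X \<in> XX" for X using H that p0 by simp
  have aff: "affine_along \<phi> (rv_span W)"
    unfolding affine_along_def
  proof (intro conjI ballI allI)
    fix U assume "U \<in> rv_span W"
    then show "\<phi> U < \<infinity>" using H' spanX by simp
  next
    fix U V assume U: "U \<in> rv_span W" and V: "V \<in> rv_span W"
    fix \<alpha> \<beta> :: real
    have UX: "U \<in> XX" and VX: "V \<in> XX" using spanX U V by auto
    have iU: "integrable M U" and iV: "integrable M V" using XXint UX VX by auto
    have L: "(\<lambda>\<omega>. \<alpha> * U \<omega> + \<beta> * V \<omega>) \<in> XX" by (intro XXlin UX VX)
    have "(\<integral>\<omega>. \<alpha> * U \<omega> + \<beta> * V \<omega> \<partial>M) = \<alpha> * (\<integral>\<omega>. U \<omega> \<partial>M) + \<beta> * (\<integral>\<omega>. V \<omega> \<partial>M)"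
      using iU iV by simp
    then show "\<phi> (\<lambda>\<omega>. \<alpha> * U \<omega> + \<beta> * V \<omega>) - \<phi> (\<lambda>_. 0) =
        ereal \<alpha> * (\<phi> U - \<phi> (\<lambda>_. 0)) + ereal \<beta> * (\<phi> V - \<phi> (\<lambda>_. 0))"
      using H'[OF L] H'[OF UX] H'[OF VX] p0 by (simp add: algebra_simps)
  qed
  have tr: "\<phi> (\<lambda>\<omega>. X \<omega> + U \<omega>) = \<phi> X + \<phi> U - \<phi> (\<lambda>_. 0)" if X: "X \<in> XX" and U: "U \<in> rv_span W" for X U
  proof -
    have UX: "U \<in> XX" using spanX U by auto
    have iU: "integrable M U" and iX: "integrable M X" using XXint UX X by auto
    have L: "(\<lambda>\<omega>. X \<omega> + U \<omega>) \<in> XX" by (intro XXadd X UX)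
    have "(\<integral>\<omega>. X \<omega> + U \<omega> \<partial>M) = (\<integral>\<omega>. X \<omega> \<partial>M) + (\<integral>\<omega>. U \<omega> \<partial>M)" using iU iX by simp
    then show ?thesis using H'[OF L] H'[OF UX] H'[OF X] p0 by (simp add: algebra_simps)
  qed
  show ?thesis unfolding translation_invariant_along_def using aff tr by blast
qed

lemma exists_nonconst: "\<exists>Z\<in>XX. nonconstant_rv M Z"
proof -
  interpret prob_space M by (rule ps)
  obtain B where B: "B \<in> events" "B \<subseteq> space M" "0 < prob B" "prob B < prob (space M)"
    using na unfolding nonatomic_def by (metis prob_space sets.top zero_less_one)
  have B1: "prob B < 1" using B(4) prob_space by simp
  define Z where "Z = (\<lambda>\<omega>. indicator B \<omega> :: real)"
  have ZL: "Z \<in> Linf M" unfolding Linf_def Z_def using B(1)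
    by (auto intro!: exI[of _ 1] simp: indicator_def)
  have "nonconstant_rv M Z"
    unfolding nonconstant_rv_def
  proof
    assume "\<exists>c. AE \<omega> in M. Z \<omega> = c"
    then obtain c where c: "AE \<omega> in M. Z \<omega> = c" by blast
    show False
    proof (cases "c = 1")
      case True
      have "AE \<omega> in M. \<omega> \<in> B" using c
      proof eventually_elim
        case (elim \<omega>) then show ?case using True by (auto simp: Z_def indicator_def split: if_splits)
      qed
      then have "emeasure M (space M - B) = 0"
        using AE_iff_measurable[of "space M - B" M "\<lambda>\<omega>. \<omega> \<in> B"] B(1) by auto
      then have "prob (space M - B) = 0" by (simp add: emeasure_eq_measure)
      then show False using prob_compl[OF B(1)] B1 by simp
    next
      case False
      have "AE \<omega> in M. \<omega> \<notin> B" using c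
      proof eventually_elim
        case (elim \<omega>) then show ?case using False by (auto simp: Z_def indicator_def split: if_splits)
      qed
      then have "emeasure M B = 0"
        using AE_iff_measurable[of B M "\<lambda>\<omega>. \<omega> \<notin> B"] B(1,2) by auto
      then show False using B(3) by (simp add: emeasure_eq_measure)
    qed
  qed
  then show ?thesis using ZL LX by blast
qed

end

theorem corollary4p8:
  fixes M :: "'a measure" and XX XXs :: "('a \<Rightarrow> real) set"
    and \<phi> :: "('a \<Rightarrow> real) \<Rightarrow> ereal"
  assumes "prob_space M" and "nonatomic M"
    and "linear_subspace_rv XX" and "linear_subspace_rv XXs"
    and "law_invariant_set M XX" and "law_invariant_set M XXs"
    and "\<forall>X\<in>XX. integrable M X" and "\<forall>Y\<in>XXs. integrable M Y"
    and "Linf M \<subseteq> XX" and "Linf M \<subseteq> XXs"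
    and "\<forall>X\<in>XX. \<forall>Y\<in>XXs. integrable M (\<lambda>\<omega>. X \<omega> * Y \<omega>)"
    and "\<forall>X\<in>XX. \<phi> X \<noteq> -\<infinity>"
    and "\<exists>X\<in>XX. \<phi> X < \<infinity>"
    and "convex_on_rv XX \<phi>"
    and "lsc_wrt (weak_top M XX XXs) \<phi>"
    and "law_invariant_fun M XX \<phi>"
    and "translation_invariant_along XX \<phi> (rv_span (\<lambda>_. 1))"
  shows "((\<exists>Z\<in>XX. nonconstant_rv M Z \<and> affine_along \<phi> (rv_span Z))
            \<longleftrightarrow> (\<exists>Z\<in>XX. nonconstant_rv M Z \<and> translation_invariant_along XX \<phi> (rv_span Z)))
       \<and> ((\<exists>Z\<in>XX. nonconstant_rv M Z \<and> translation_invariant_along XX \<phi> (rv_span Z))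
            \<longleftrightarrow> (\<exists>a::real. \<forall>X\<in>XX. \<phi> X = ereal (a * (\<integral>\<omega>. X \<omega> \<partial>M)) + \<phi> (\<lambda>_. 0)))"
proof -
  interpret cor M XX XXs \<phi> unfolding cor_def using assms by blast
  have ac: "(\<exists>Z\<in>XX. nonconstant_rv M Z \<and> affine_along \<phi> (rv_span Z)) \<Longrightarrow>
      (\<exists>a::real. \<forall>X\<in>XX. \<phi> X = ereal (a * (\<integral>\<omega>. X \<omega> \<partial>M)) + \<phi> (\<lambda>_. 0))"
    by (rule a_imp_c)
  have cb: "(\<exists>a::real. \<forall>X\<in>XX. \<phi> X = ereal (a * (\<integral>\<omega>. X \<omega> \<partial>M)) + \<phi> (\<lambda>_. 0)) \<Longrightarrow>
      (\<exists>Z\<in>XX. nonconstant_rv M Z \<and> translation_invariant_along XX \<phi> (rv_span Z))"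
  proof -
    assume "\<exists>a::real. \<forall>X\<in>XX. \<phi> X = ereal (a * (\<integral>\<omega>. X \<omega> \<partial>M)) + \<phi> (\<lambda>_. 0)"
    then obtain a where a: "\<forall>X\<in>XX. \<phi> X = ereal (a * (\<integral>\<omega>. X \<omega> \<partial>M)) + \<phi> (\<lambda>_. 0)" by blast
    obtain Z where Z: "Z \<in> XX" "nonconstant_rv M Z" using exists_nonconst by blast
    show ?thesis using c_imp_TI[OF a Z(1)] Z by blast
  qed
  have ba: "(\<exists>Z\<in>XX. nonconstant_rv M Z \<and> translation_invariant_along XX \<phi> (rv_span Z)) \<Longrightarrow>
      (\<exists>Z\<in>XX. nonconstant_rv M Z \<and> affine_along \<phi> (rv_span Z))"
    unfolding translation_invariant_along_def by blast
  show ?thesis using ac cb ba by blast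
qed


end
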